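(* Let $n\ge1$, $N=\{1,\dots,n\}$, $0\le t_0<t_1$, $x_0\in\mathbb R^m$, and for each $k\in N$ let $U_k\subset C([t_0,t_1];\mathbb{R}^{m_k})$ be a set of admissible controls as described in the context, which is in addition convex. Let $f\in Y$, and for each $i\in N$ let $\boldsymbol J_i=(J^i_1,\dots,J^i_{d_i})$ be the payoff $\boldsymbol{J}_i(u_1,\dots,u_n)=\boldsymbol{\psi}_i(x(t_1))+\int_{t_0}^{t_1}\boldsymbol{L}_i(t,x(t),u_1(t),\dots,u_n(t))\,\mathrm{d}t$, where $x$ is the state generated by $(u_1,\dots,u_n)$. For each $i\in N$ let $\omega_i=(\omega^i_1,\dots,\omega^i_{d_i})\in\mathrm{int}\,\mathbb R^{d_i}_+$ (all components positive). Suppose that for each $i\in N$: (i) $\sum_{k=1}^{d_i}\omega^i_k\cdot J^i_k:U_1\times\dots\times U_n\to\mathcal I(\mathbb R)$ is continuous, and (ii) for every $u_{-i}\in U_{-i}$, the map $u_i\mapsto\sum_{k=1}^{d_i}\omega^i_k\cdot J^i_k(u_i,u_{-i})$ is generalized $\mathcal I(\mathbb R_+)$-quasi-concave on $U_i$. Then the game has at least one weighted open-loop Pareto-Nash equilibrium, i.e. there exists $(u_1^*,\dots,u_n^* )\in U_1\times\dots\times U_n$ such that for every $i\in N$ and every $u_i\in U_i$, $$\sum_{k=1}^{d_i}\omega^i_k J^i_k(u_i^*,u_{-i}^* )\nprec\sum_{k=1}^{d_i}\omega^i_k J^i_k(u_i,u_{-i}^* ).$$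
   Context: Interval arithmetic: $\mathcal{I}(\mathbb{R})$ is the set of compact intervals, $\mathcal I(\mathbb R)^d$ the $d$-tuples of them; $[a,b]+[c,d]=[a+c,b+d]$ and $\lambda[a,b]=[\min(\lambda a,\lambda b),\max(\lambda a,\lambda b)]$. The gH-difference is $[\underline a,\overline a]\ominus_{gH}[\underline b,\overline b]=[\min\{\underline a-\underline b,\overline a-\overline b\},\max\{\underline a-\underline b,\overline a-\overline b\}]$ (componentwise for vectors). $\mathcal I(\mathbb R_+)$ is the set of compact intervals contained in $[0,\infty)$ and $\mathrm{int}\,\mathcal I(\mathbb R_+)$ its interior (compact intervals contained in $(0,\infty)$). For intervals $A,B$, $B\prec A$ means $A\ominus_{gH}B\in\mathrm{int}\,\mathcal I(\mathbb R_+)$, and $B\nprec A$ its negation. An interval-valued function $F$ on a Hausdorff space is continuous if for each $x$ and $\epsilon>0$ there is an open neighbourhood $o(x)$ with $F(x')\ominus_{gH}F(x)\subset(-\epsilon,\epsilon)$ for $x'\in o(x)$. On a nonempty convex set $\mathcal K$, $F:\mathcal K\to\mathcal I(\mathbb R)$ is generalized $\mathcal I(\mathbb R_+)$-quasi-concave if for all $x_1,x_2\in\mathcal K$, $A\in\mathcal I(\mathbb R)$, $\lambda\in[0,1]$: $A\ominus_{gH}F(x_j)\notin\mathrm{int}\,\mathcal I(\mathbb R_+)$ for $j=1,2$ implies $A\ominus_{gH}F(\lambda x_1+(1-\lambda)x_2)\notin\mathrm{int}\,\mathcal I(\mathbb R_+)$. Setting: $C([t_0,t_1];\mathbb R^{m_k})$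 has the sup norm $\|u\|=\max_t\|u(t)\|$, and $U_1\times\dots\times U_n$ the product topology. Each $U_k$ is nonempty and closed, uniformly bounded by some $M_k>0$ ($\|u_k\|\le M_k$), and equicontinuous. $D=\{(t,x,u_1,\dots,u_n):t\in[t_0,t_1],x\in\mathbb R^m,\|u_k\|\le M_k\}$ and $Y$ is the set of continuous $f:D\to\mathbb R^m$ that are bounded on $D$ and Lipschitz in $x$ uniformly (constant $L>0$). For $f\in Y$, $u_k\in U_k$, the state $x$ is the unique solution of $\dot x=f(t,x,u_1(t),\dots,u_n(t))$, $x(t_0)=x_0$. $\boldsymbol\psi_i:\mathbb R^m\to\mathcal I(\mathbb R)^{d_i}$, $\boldsymbol L_i:[t_0,t_1]\times\mathbb R^m\times\mathbb R^{m_1}\times\dots\times\mathbb R^{m_n}\to\mathcal I(\mathbb R)^{d_i}$; the integral of an interval-valued function is the Aumann integral, equal to $[\int\underline f,\int\overline f]$ for bounded integrable functions. *)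

theory Defs
  imports "HOL-Analysis.Analysis"
begin

section \<open>Compact intervals, represented as pairs (lower, upper)\<close>

type_synonym ival = "real \<times> real"

definition valid_ival :: "ival \<Rightarrow> bool" where
  "valid_ival A \<longleftrightarrow> fst A \<le> snd A"

definition iadd :: "ival \<Rightarrow> ival \<Rightarrow> ival" where
  "iadd A B = (fst A + fst B, snd A + snd B)"

definition iscale :: "real \<Rightarrow> ival \<Rightarrow> ival" where
  "iscale l A = (min (l * fst A) (l * snd A), max (l * fst A) (l * snd A))"

definition gH_diff :: "ival \<Rightarrow> ival \<Rightarrow> ival" where
  "gH_diff A B = (min (fst A - fst B) (snd A - snd B), max (fst A - fst B) (snd A - snd B))"

text \<open>Membership in int I(R_+): compact interval contained in (0,infinity).\<close>
definition int_pos :: "ival \<Rightarrow> bool" where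
  "int_pos A \<longleftrightarrow> valid_ival A \<and> 0 < fst A"

definition iprec :: "ival \<Rightarrow> ival \<Rightarrow> bool" where
  "iprec B A \<longleftrightarrow> int_pos (gH_diff A B)"

definition wsum :: "(nat \<Rightarrow> real) \<Rightarrow> nat \<Rightarrow> (nat \<Rightarrow> ival) \<Rightarrow> ival" where
  "wsum w d J = foldr (\<lambda>k acc. iadd (iscale (w k) (J k)) acc) [1..<Suc d] (0, 0)"

section \<open>Vectors of R^d as nat => real (coordinates 0..d-1), controls\<close>

definition vnorm :: "nat \<Rightarrow> (nat \<Rightarrow> real) \<Rightarrow> real" where
  "vnorm d v = sqrt (\<Sum>j<d. (v j)\<^sup>2)"

text \<open>C([t0,t1]; R^d): continuous functions, zero-padded outside [t0,t1] and
  in coordinates j >= d (unique representatives).\<close>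
definition Cspace :: "real \<Rightarrow> real \<Rightarrow> nat \<Rightarrow> (real \<Rightarrow> nat \<Rightarrow> real) set" where
  "Cspace t0 t1 d = {u. continuous_on {t0..t1} u \<and> (\<forall>t j. d \<le> j \<longrightarrow> u t j = 0)
                        \<and> (\<forall>t. t \<notin> {t0..t1} \<longrightarrow> u t = (\<lambda>j. 0))}"

definition supdist :: "real \<Rightarrow> real \<Rightarrow> nat \<Rightarrow> (real \<Rightarrow> nat \<Rightarrow> real) \<Rightarrow> (real \<Rightarrow> nat \<Rightarrow> real) \<Rightarrow> real" where
  "supdist t0 t1 d u v = (SUP t\<in>{t0..t1}. vnorm d (\<lambda>j. u t j - v t j))"

definition admissible :: "real \<Rightarrow> real \<Rightarrow> nat \<Rightarrow> real \<Rightarrow> (real \<Rightarrow> nat \<Rightarrow> real) set \<Rightarrow> bool" where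
  "admissible t0 t1 d Mk U \<longleftrightarrow>
     U \<noteq> {} \<and> U \<subseteq> Cspace t0 t1 d
     \<comment> \<open>closed in C([t0,t1];R^d) w.r.t. the sup norm\<close>
     \<and> (\<forall>u\<in>Cspace t0 t1 d. (\<forall>e>0. \<exists>v\<in>U. supdist t0 t1 d u v < e) \<longrightarrow> u \<in> U)
     \<comment> \<open>uniformly bounded by Mk > 0\<close>
     \<and> 0 < Mk \<and> (\<forall>u\<in>U. \<forall>t\<in>{t0..t1}. vnorm d (u t) \<le> Mk)
     \<comment> \<open>equicontinuous\<close>
     \<and> (\<forall>t\<in>{t0..t1}. \<forall>e>0. \<exists>\<delta>>0. \<forall>s\<in>{t0..t1}. \<forall>u\<in>U.
           \<bar>s - t\<bar> < \<delta> \<longrightarrow> vnorm d (\<lambda>j. u s j - u t j) < e)"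

definition cmb :: "real \<Rightarrow> (real \<Rightarrow> nat \<Rightarrow> real) \<Rightarrow> (real \<Rightarrow> nat \<Rightarrow> real) \<Rightarrow> (real \<Rightarrow> nat \<Rightarrow> real)" where
  "cmb l u v = (\<lambda>t j. l * u t j + (1 - l) * v t j)"

definition convex_ctrl :: "(real \<Rightarrow> nat \<Rightarrow> real) set \<Rightarrow> bool" where
  "convex_ctrl U \<longleftrightarrow> (\<forall>u\<in>U. \<forall>v\<in>U. \<forall>l\<in>{0..1}. cmb l u v \<in> U)"

definition Prof :: "nat \<Rightarrow> (nat \<Rightarrow> (real \<Rightarrow> nat \<Rightarrow> real) set) \<Rightarrow> (nat \<Rightarrow> real \<Rightarrow> nat \<Rightarrow> real) set" where
  "Prof n U = {us. (\<forall>k\<in>{1..n}. us k \<in> U k) \<and> (\<forall>k. k \<notin> {1..n} \<longrightarrow> us k = (\<lambda>t j. 0))}"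

text \<open>Continuity of an interval-valued function on U_1 x ... x U_n with the product
  of the sup-norm topologies (finite product: basic neighbourhoods are products of balls).\<close>
definition icont_prof :: "nat \<Rightarrow> real \<Rightarrow> real \<Rightarrow> (nat \<Rightarrow> nat) \<Rightarrow> (nat \<Rightarrow> (real \<Rightarrow> nat \<Rightarrow> real) set)
     \<Rightarrow> ((nat \<Rightarrow> real \<Rightarrow> nat \<Rightarrow> real) \<Rightarrow> ival) \<Rightarrow> bool" where
  "icont_prof n t0 t1 m U F \<longleftrightarrow>
     (\<forall>p\<in>Prof n U. \<forall>e>0. \<exists>\<delta>>0. \<forall>q\<in>Prof n U.
        (\<forall>k\<in>{1..n}. supdist t0 t1 (m k) (q k) (p k) < \<delta>) \<longrightarrow>
        (let D = gH_diff (F q) (F p) in -e < fst D \<and> snd D < e))"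

definition gqc :: "(real \<Rightarrow> nat \<Rightarrow> real) set \<Rightarrow> ((real \<Rightarrow> nat \<Rightarrow> real) \<Rightarrow> ival) \<Rightarrow> bool" where
  "gqc K F \<longleftrightarrow> (\<forall>x1\<in>K. \<forall>x2\<in>K. \<forall>A. \<forall>l\<in>{0..1}. valid_ival A \<longrightarrow>
      \<not> int_pos (gH_diff A (F x1)) \<longrightarrow> \<not> int_pos (gH_diff A (F x2)) \<longrightarrow>
      \<not> int_pos (gH_diff A (F (cmb l x1 x2))))"

text \<open>Control values (u_1(t),...,u_n(t)) are packed as w :: nat => nat => real,
  w k the value of player k, zero outside k in {1..n} and coordinates >= m k.\<close>
definition Ddom :: "nat \<Rightarrow> real \<Rightarrow> real \<Rightarrow> (nat \<Rightarrow> nat) \<Rightarrow> (nat \<Rightarrow> real)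
     \<Rightarrow> (real \<times> 'x::euclidean_space \<times> (nat \<Rightarrow> nat \<Rightarrow> real)) set" where
  "Ddom n t0 t1 m M = {(t, x, w). t \<in> {t0..t1} \<and> (\<forall>k\<in>{1..n}. vnorm (m k) (w k) \<le> M k)
       \<and> (\<forall>k j. k \<notin> {1..n} \<or> m k \<le> j \<longrightarrow> w k j = 0)}"

definition Yclass :: "nat \<Rightarrow> real \<Rightarrow> real \<Rightarrow> (nat \<Rightarrow> nat) \<Rightarrow> (nat \<Rightarrow> real)
     \<Rightarrow> (real \<Rightarrow> 'x::euclidean_space \<Rightarrow> (nat \<Rightarrow> nat \<Rightarrow> real) \<Rightarrow> 'x) set" where
  "Yclass n t0 t1 m M = {f.
      continuous_on (Ddom n t0 t1 m M) (\<lambda>(t, x, w). f t x w)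
    \<and> (\<exists>B. \<forall>(t, x, w)\<in>Ddom n t0 t1 m M. norm (f t x w) \<le> B)
    \<and> (\<exists>L>0. \<forall>(t, x, w)\<in>Ddom n t0 t1 m M. \<forall>y.
           norm (f t x w - f t y w) \<le> L * norm (x - y))}"

definition state :: "(real \<Rightarrow> 'x::euclidean_space \<Rightarrow> (nat \<Rightarrow> nat \<Rightarrow> real) \<Rightarrow> 'x) \<Rightarrow> real \<Rightarrow> real \<Rightarrow> 'x
     \<Rightarrow> (nat \<Rightarrow> real \<Rightarrow> nat \<Rightarrow> real) \<Rightarrow> real \<Rightarrow> 'x" where
  "state f t0 t1 x0 us = (THE x. x t0 = x0
      \<and> (\<forall>t\<in>{t0..t1}. (x has_vector_derivative f t (x t) (\<lambda>k. us k t)) (at t within {t0..t1}))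
      \<and> (\<forall>t. t \<notin> {t0..t1} \<longrightarrow> x t = 0))"

text \<open>Component k of the interval-vector payoff of player i; the Aumann integral of a
  bounded integrable interval function is [int lower, int upper].\<close>
definition payoff :: "(nat \<Rightarrow> 'x::euclidean_space \<Rightarrow> nat \<Rightarrow> ival)
     \<Rightarrow> (nat \<Rightarrow> real \<Rightarrow> 'x \<Rightarrow> (nat \<Rightarrow> nat \<Rightarrow> real) \<Rightarrow> nat \<Rightarrow> ival)
     \<Rightarrow> (real \<Rightarrow> 'x \<Rightarrow> (nat \<Rightarrow> nat \<Rightarrow> real) \<Rightarrow> 'x) \<Rightarrow> real \<Rightarrow> real \<Rightarrow> 'x
     \<Rightarrow> nat \<Rightarrow> (nat \<Rightarrow> real \<Rightarrow> nat \<Rightarrow> real) \<Rightarrow> nat \<Rightarrow> ival" where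
  "payoff \<psi> L f t0 t1 x0 i us k =
     (let x = state f t0 t1 x0 us in
      iadd (\<psi> i (x t1) k)
           (integral {t0..t1} (\<lambda>t. fst (L i t (x t) (\<lambda>j. us j t) k)),
            integral {t0..t1} (\<lambda>t. snd (L i t (x t) (\<lambda>j. us j t) k))))"

end

theory Submission
  imports Defs "HOL-Analysis.Analysis" "HOL-Complex_Analysis.Great_Picard"
begin

lemma approx_brouwer:
  fixes F :: "(nat \<Rightarrow> real) \<Rightarrow> (nat \<Rightarrow> real)" and N :: nat and \<epsilon> :: real
  assumes FQ: "\<And>x. (\<forall>i<N. 0 \<le> x i \<and> x i \<le> 1) \<Longrightarrow> (\<forall>i<N. 0 \<le> F x i \<and> F x i \<le> 1)"
    and uc: "\<And>e. e > 0 \<Longrightarrow> \<exists>\<delta>>0. \<forall>x y. (\<forall>i<N. 0 \<le> x i \<and> x i \<le> 1) \<longrightarrow> (\<forall>i<N. 0 \<le> y i \<and> y i \<le> 1)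
               \<longrightarrow> (\<forall>i<N. \<bar>x i - y i\<bar> < \<delta>) \<longrightarrow> (\<forall>i<N. \<bar>F x i - F y i\<bar> < e)"
    and eps: "\<epsilon> > 0"
  shows "\<exists>z. (\<forall>i<N. 0 \<le> z i \<and> z i \<le> 1) \<and> (\<forall>i<N. \<bar>F z i - z i\<bar> < \<epsilon>)"
proof -
  obtain \<delta> where d: "\<delta> > 0" and dd: "\<And>x y. (\<forall>i<N. 0 \<le> x i \<and> x i \<le> 1) \<Longrightarrow> (\<forall>i<N. 0 \<le> y i \<and> y i \<le> 1)
               \<Longrightarrow> (\<forall>i<N. \<bar>x i - y i\<bar> < \<delta>) \<Longrightarrow> (\<forall>i<N. \<bar>F x i - F y i\<bar> < \<epsilon>/2)"
    using uc[of "\<epsilon>/2"] eps by auto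
  define p :: nat where "p = nat (ceiling (max (1/\<delta>) (2/\<epsilon>))) + 1"
  have p0: "p > 0" unfolding p_def by simp
  have "real p > max (1/\<delta>) (2/\<epsilon>)" unfolding p_def by linarith
  then have p1: "1 / real p < \<delta>" and p2: "1 / real p < \<epsilon>/2"
    using d eps p0 by (auto simp: field_simps)
  define pt where "pt = (\<lambda>(x::nat\<Rightarrow>nat) i. real (x i) / real p)"
  have ptQ: "\<forall>i<N. 0 \<le> pt x i \<and> pt x i \<le> 1" if "\<forall>i<N. x i \<le> p" for x
    using that p0 by (auto simp: pt_def field_simps)
  define label where "label = (\<lambda>x i. if F (pt x) i < pt x i \<or> x i = p then 1 else (0::nat))"
  have k1: "\<forall>x. (\<forall>i<N. x i \<le> p) \<longrightarrow> (\<forall>i<N. label x i = (0::nat) \<or> label x i = 1)"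
    by (auto simp: label_def)
  have k2: "\<forall>x. (\<forall>i<N. x i \<le> p) \<longrightarrow> (\<forall>i<N. x i = 0 \<longrightarrow> label x i = 0)"
  proof (intro allI impI)
    fix x i assume x: "\<forall>i<N. x i \<le> p" and i: "i < N" and xi: "x i = 0"
    have "0 \<le> F (pt x) i" using FQ[OF ptQ[OF x]] i by auto
    moreover have "pt x i = 0" using xi by (simp add: pt_def)
    ultimately show "label x i = 0" using xi p0 by (auto simp: label_def)
  qed
  have k3: "\<forall>x. (\<forall>i<N. x i \<le> p) \<longrightarrow> (\<forall>i<N. x i = p \<longrightarrow> label x i = 1)"
    by (auto simp: label_def)
  obtain q where q1: "\<forall>i<N. q i < p"
    and q2: "\<forall>i<N. \<exists>r s. (\<forall>j<N. q j \<le> r j \<and> r j \<le> q j + 1) \<and> (\<forall>j<N. q j \<le> s j \<and> s j \<le> q j + 1) \<and> label r i \<noteq> label s i"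
    using kuhn_lemma[OF p0 k1 k2 k3] by blast
  have l0: "pt x i \<le> F (pt x) i" if "label x i = 0" for x i
    using that by (auto simp: label_def split: if_splits)
  have l1: "F (pt x) i \<le> pt x i" if "label x i = 1" "\<forall>i<N. x i \<le> p" "i < N" for x i
  proof (cases "x i = p")
    case True
    then have "pt x i = 1" using p0 by (simp add: pt_def)
    then show ?thesis using FQ[OF ptQ[OF that(2)]] that(3) by auto
  next
    case False then show ?thesis using that(1) by (auto simp: label_def split: if_splits)
  qed
  have qQ: "\<forall>i<N. q i \<le> p" using q1 by (simp add: less_imp_le)
  show ?thesis
  proof (intro exI conjI)
    show "\<forall>i<N. 0 \<le> pt q i \<and> pt q i \<le> 1" using ptQ[OF qQ] .
    show "\<forall>i<N. \<bar>F (pt q) i - pt q i\<bar> < \<epsilon>"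
    proof (intro allI impI)
      fix i assume i: "i < N"
      obtain r s where r: "\<forall>j<N. q j \<le> r j \<and> r j \<le> q j + 1" and s: "\<forall>j<N. q j \<le> s j \<and> s j \<le> q j + 1"
        and rs: "label r i \<noteq> label s i" using q2 i by blast
      have rQ: "\<forall>j<N. r j \<le> p" using r q1 by (metis Suc_eq_plus1 Suc_leI order_trans)
      have sQ: "\<forall>j<N. s j \<le> p" using s q1 by (metis Suc_eq_plus1 Suc_leI order_trans)
      have close: "\<forall>j<N. \<bar>pt x j - pt q j\<bar> \<le> 1 / real p" if "\<forall>j<N. q j \<le> x j \<and> x j \<le> q j + 1" for x
      proof (intro allI impI)
        fix j assume "j < N"
        then have "real (q j) \<le> real (x j)" "real (x j) \<le> real (q j) + 1" using that by auto
        then show "\<bar>pt x j - pt q j\<bar> \<le> 1 / real p" using p0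
          by (simp add: pt_def diff_divide_distrib[symmetric] abs_le_iff divide_right_mono)
      qed
      have Fr: "\<bar>F (pt r) i - F (pt q) i\<bar> < \<epsilon>/2"
        using dd[OF ptQ[OF rQ] ptQ[OF qQ]] close[OF r] p1 i by (meson le_less_trans)
      have Fs: "\<bar>F (pt s) i - F (pt q) i\<bar> < \<epsilon>/2"
        using dd[OF ptQ[OF sQ] ptQ[OF qQ]] close[OF s] p1 i by (meson le_less_trans)
      have cr: "\<bar>pt r i - pt q i\<bar> \<le> 1 / real p" using close[OF r] i by auto
      have cs: "\<bar>pt s i - pt q i\<bar> \<le> 1 / real p" using close[OF s] i by auto
      have "label r i = 0 \<and> label s i = 1 \<or> label r i = 1 \<and> label s i = 0"
        using rs k1 rQ sQ i by (metis)
      then show "\<bar>F (pt q) i - pt q i\<bar> < \<epsilon>"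
      proof
        assume "label r i = 0 \<and> label s i = 1"
        then have "pt r i \<le> F (pt r) i" "F (pt s) i \<le> pt s i"
          using l0 l1[OF _ sQ i] by auto
        then show ?thesis using Fr Fs cr cs p2 unfolding abs_less_iff abs_le_iff by linarith
      next
        assume "label r i = 1 \<and> label s i = 0"
        then have "pt s i \<le> F (pt s) i" "F (pt r) i \<le> pt r i"
          using l0 l1[OF _ rQ i] by auto
        then show ?thesis using Fr Fs cr cs p2 unfolding abs_less_iff abs_le_iff by linarith
      qed
    qed
  qed
qed

definition seqcpt :: "'p set \<Rightarrow> ('p \<Rightarrow> 'p \<Rightarrow> real) \<Rightarrow> bool" where
  "seqcpt K \<rho> \<longleftrightarrow> (\<forall>X::nat\<Rightarrow>'p. (\<forall>n. X n \<in> K) \<longrightarrow>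
      (\<exists>x\<in>K. \<exists>r::nat\<Rightarrow>nat. strict_mono r \<and> (\<forall>e>0. \<exists>N. \<forall>n\<ge>N. \<rho> (X (r n)) x < e)))"

lemma nested_subseq:
  fixes X :: "nat \<Rightarrow> 'a" and P :: "'i \<Rightarrow> (nat \<Rightarrow> 'a) \<Rightarrow> bool"
  assumes "finite I"
    and ex: "\<And>i (X::nat \<Rightarrow> 'a). i \<in> I \<Longrightarrow> (\<forall>n. X n \<in> A) \<Longrightarrow> \<exists>r::nat\<Rightarrow>nat. strict_mono r \<and> P i (X \<circ> r)"
    and mono: "\<And>i X (r::nat\<Rightarrow>nat). i \<in> I \<Longrightarrow> P i X \<Longrightarrow> strict_mono r \<Longrightarrow> P i (X \<circ> r)"
    and X: "\<forall>n. X n \<in> A"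
  shows "\<exists>r::nat\<Rightarrow>nat. strict_mono r \<and> (\<forall>i\<in>I. P i (X \<circ> r))"
  using assms(1) ex mono
proof (induction I rule: finite_induct)
  case empty
  have "strict_mono (id::nat\<Rightarrow>nat)" by (simp add: strict_mono_def)
  then show ?case by blast
next
  case (insert i F)
  obtain r1 where r1: "strict_mono r1" "\<forall>j\<in>F. P j (X \<circ> r1)"
    using insert.IH insert.prems by blast
  have "\<forall>n. (X \<circ> r1) n \<in> A" using X by simp
  then obtain r2 where r2: "strict_mono r2" "P i ((X \<circ> r1) \<circ> r2)"
    using insert.prems(1)[of i "X \<circ> r1"] by blast
  show ?case
  proof (intro exI conjI ballI)
    show "strict_mono (r1 \<circ> r2)" using r1(1) r2(1) by (simp add: strict_mono_def)
    fix j assume j: "j \<in> insert i F"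
    show "P j (X \<circ> (r1 \<circ> r2))"
    proof (cases "j = i")
      case True then show ?thesis using r2(2) by (simp add: o_assoc)
    next
      case False
      then have "j \<in> F" using j by auto
      have "P j (X \<circ> r1)" using r1(2) \<open>j \<in> F\<close> by blast
      then have "P j ((X \<circ> r1) \<circ> r2)" using insert.prems(2)[of j "X \<circ> r1" r2] \<open>j \<in> F\<close> r2(1) by blast
      then show ?thesis by (simp add: o_assoc)
    qed
  qed
qed

lemma finite_delta:
  fixes N :: nat
  assumes "\<forall>l<N. \<exists>\<delta>>0. P l \<delta>"
    and "\<And>l \<delta> \<delta>'. P l \<delta> \<Longrightarrow> 0 < \<delta>' \<Longrightarrow> \<delta>' \<le> \<delta> \<Longrightarrow> P l \<delta>'"
  shows "\<exists>\<delta>>0. \<forall>l<N. P l (\<delta>::real)"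
  using assms(1)
proof (induction N)
  case 0 then show ?case by (intro exI[of _ 1]) auto
next
  case (Suc N)
  obtain d1 where d1: "d1 > 0" "\<forall>l<N. P l d1" using Suc by auto
  obtain d2 where d2: "d2 > 0" "P N d2" using Suc.prems by auto
  show ?case
  proof (intro exI conjI allI impI)
    show "0 < min d1 d2" using d1 d2 by simp
    fix l assume "l < Suc N"
    then show "P l (min d1 d2)"
      using d1 d2 assms(2) by (metis less_Suc_eq min.cobounded1 min.cobounded2 min_less_iff_conj)
  qed
qed

lemma seq_unif_cont:
  fixes f :: "'p \<Rightarrow> real"
  assumes sc: "seqcpt K \<rho>"
    and sym: "\<And>x y. x \<in> K \<Longrightarrow> y \<in> K \<Longrightarrow> \<rho> x y = \<rho> y x"
    and tri: "\<And>x y z. x \<in> K \<Longrightarrow> y \<in> K \<Longrightarrow> z \<in> K \<Longrightarrow> \<rho> x z \<le> \<rho> x y + \<rho> y z"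
    and cont: "\<And>x e. x \<in> K \<Longrightarrow> e > 0 \<Longrightarrow> \<exists>\<delta>>0. \<forall>y\<in>K. \<rho> x y < \<delta> \<longrightarrow> \<bar>f y - f x\<bar> < e"
    and e: "e > 0"
  shows "\<exists>\<delta>>0. \<forall>x\<in>K. \<forall>y\<in>K. \<rho> x y < \<delta> \<longrightarrow> \<bar>f x - f y\<bar> < e"
proof (rule ccontr)
  assume "\<not> ?thesis"
  then have "\<forall>n. \<exists>x\<in>K. \<exists>y\<in>K. \<rho> x y < 1 / Suc n \<and> \<bar>f x - f y\<bar> \<ge> e"
    by (metis not_le of_nat_0_less_iff zero_less_Suc zero_less_divide_1_iff)
  then obtain X Y where XY: "\<And>n. X n \<in> K" "\<And>n. Y n \<in> K" "\<And>n. \<rho> (X n) (Y n) < 1 / Suc n"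
      "\<And>n. \<bar>f (X n) - f (Y n)\<bar> \<ge> e"
    by metis
  obtain x and r :: "nat \<Rightarrow> nat" where x: "x \<in> K" "strict_mono r" "\<forall>e>0. \<exists>N. \<forall>n\<ge>N. \<rho> (X (r n)) x < e"
    using sc XY(1) unfolding seqcpt_def by blast
  obtain \<delta> where d: "\<delta> > 0" "\<forall>y\<in>K. \<rho> x y < \<delta> \<longrightarrow> \<bar>f y - f x\<bar> < e/2"
    using cont[OF x(1), of "e/2"] e by auto
  obtain N1 where N1: "\<forall>n\<ge>N1. \<rho> (X (r n)) x < \<delta>/2" using x(3) half_gt_zero[OF d(1)] by blast
  obtain N2 where N2: "1 / Suc N2 < \<delta>/2"
    using d by (metis half_gt_zero_iff nat_approx_posE)
  define n where "n = max N1 N2"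
  have "N2 \<le> r n" using seq_suble[OF x(2), of n] n_def by simp
  then have "1 / Suc (r n) \<le> 1 / Suc N2" by (simp add: frac_le)
  then have a: "\<rho> (X (r n)) (Y (r n)) < \<delta>/2" using XY(3)[of "r n"] N2 by linarith
  have b: "\<rho> x (X (r n)) < \<delta>/2" using N1 n_def sym[OF x(1) XY(1)] by auto
  have "\<rho> x (Y (r n)) < \<delta>" using tri[OF x(1) XY(1) XY(2), of "r n" "r n"] a b by linarith
  then have "\<bar>f (Y (r n)) - f x\<bar> < e/2" using d XY(2) by auto
  moreover have "\<bar>f (X (r n)) - f x\<bar> < e/2" using d XY(1) b by auto
  ultimately show False using XY(4)[of "r n"] by linarith
qed

lemma seq_finite_subcover:
  assumes sc: "seqcpt K \<rho>"
    and sym: "\<And>x y. x \<in> K \<Longrightarrow> y \<in> K \<Longrightarrow> \<rho> x y = \<rho> y x"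
    and tri: "\<And>x y z. x \<in> K \<Longrightarrow> y \<in> K \<Longrightarrow> z \<in> K \<Longrightarrow> \<rho> x z \<le> \<rho> x y + \<rho> y z"
    and refl: "\<And>x. x \<in> K \<Longrightarrow> \<rho> x x = 0"
    and cov: "\<And>x. x \<in> K \<Longrightarrow> \<exists>a\<in>A. \<exists>e>0. \<forall>y\<in>K. \<rho> x y < e \<longrightarrow> y \<in> W a"
  shows "\<exists>F. finite F \<and> F \<subseteq> A \<and> (\<forall>x\<in>K. \<exists>a\<in>F. x \<in> W a)"
proof -
  have "\<exists>\<delta>>0. \<forall>x\<in>K. \<exists>a\<in>A. \<forall>y\<in>K. \<rho> x y < \<delta> \<longrightarrow> y \<in> W a"
  proof (rule ccontr)
    assume "\<not> ?thesis"
    then have "\<forall>n. \<exists>x\<in>K. \<forall>a\<in>A. \<exists>y\<in>K. \<rho> x y < 1 / Suc n \<and> y \<notin> W a"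
      by (metis of_nat_0_less_iff zero_less_Suc zero_less_divide_1_iff)
    then obtain X where X: "\<And>n. X n \<in> K" "\<And>n a. a \<in> A \<Longrightarrow> \<exists>y\<in>K. \<rho> (X n) y < 1 / Suc n \<and> y \<notin> W a"
      by metis
    obtain x and r :: "nat \<Rightarrow> nat" where x: "x \<in> K" "strict_mono r" "\<forall>e>0. \<exists>N. \<forall>n\<ge>N. \<rho> (X (r n)) x < e"
      using sc X(1) unfolding seqcpt_def by blast
    obtain a e where ae: "a \<in> A" "e > 0" "\<forall>y\<in>K. \<rho> x y < e \<longrightarrow> y \<in> W a" using cov[OF x(1)] by auto
    obtain N1 where N1: "\<forall>n\<ge>N1. \<rho> (X (r n)) x < e/2" using x(3) half_gt_zero[OF ae(2)] by blast
    obtain N2 where N2: "1 / Suc N2 < e/2"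
      using ae by (metis half_gt_zero_iff nat_approx_posE)
    define n where "n = max N1 N2"
    have "N2 \<le> r n" using seq_suble[OF x(2), of n] n_def by simp
    then have le: "1 / Suc (r n) \<le> 1 / Suc N2" by (simp add: frac_le)
    obtain y where y: "y \<in> K" "\<rho> (X (r n)) y < 1 / Suc (r n)" "y \<notin> W a" using X(2)[OF ae(1)] by blast
    have b: "\<rho> x (X (r n)) < e/2" using N1 n_def sym[OF x(1) X(1)] by auto
    have "\<rho> x y < e" using tri[OF x(1) X(1) y(1), of "r n"] b y(2) le N2 by linarith
    then show False using ae y by auto
  qed
  then obtain \<delta> where d: "\<delta> > 0" "\<forall>x\<in>K. \<exists>a\<in>A. \<forall>y\<in>K. \<rho> x y < \<delta> \<longrightarrow> y \<in> W a" by blast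
  have "\<exists>C. finite C \<and> C \<subseteq> K \<and> (\<forall>x\<in>K. \<exists>c\<in>C. \<rho> c x < \<delta>)"
  proof (rule ccontr)
    assume H: "\<not> ?thesis"
    define nxt where "nxt = (\<lambda>C. SOME x. x \<in> K \<and> (\<forall>c\<in>C. \<rho> c x \<ge> \<delta>))"
    have nxt: "nxt C \<in> K \<and> (\<forall>c\<in>C. \<rho> c (nxt C) \<ge> \<delta>)" if "finite C" "C \<subseteq> K" for C
    proof -
      have "\<exists>x. x \<in> K \<and> (\<forall>c\<in>C. \<rho> c x \<ge> \<delta>)" using H that by (meson not_less)
      then show ?thesis unfolding nxt_def by (rule someI_ex)
    qed
    define Cs where "Cs = rec_nat {} (\<lambda>_ C. insert (nxt C) C)"
    have Cs0: "Cs 0 = {}" and CsS: "\<And>n. Cs (Suc n) = insert (nxt (Cs n)) (Cs n)"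
      by (simp_all add: Cs_def)
    have Csf: "finite (Cs n) \<and> Cs n \<subseteq> K" for n
      by (induction n) (auto simp: Cs0 CsS nxt)
    define X where "X = (\<lambda>n. nxt (Cs n))"
    have XK: "\<And>n. X n \<in> K" using nxt Csf X_def by blast
    have XC: "i < j \<Longrightarrow> X i \<in> Cs j" for i j
    proof (induction j)
      case 0 then show ?case by simp
    next
      case (Suc j) then show ?case by (auto simp: CsS X_def less_Suc_eq)
    qed
    have far: "i < j \<Longrightarrow> \<rho> (X i) (X j) \<ge> \<delta>" for i j
      using nxt[OF conjunct1[OF Csf] conjunct2[OF Csf]] XC X_def by blast
    obtain x and r :: "nat \<Rightarrow> nat" where x: "x \<in> K" "strict_mono r" "\<forall>e>0. \<exists>N. \<forall>n\<ge>N. \<rho> (X (r n)) x < e"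
      using sc XK unfolding seqcpt_def by blast
    obtain N where N: "\<forall>n\<ge>N. \<rho> (X (r n)) x < \<delta>/2" using x(3) half_gt_zero[OF d(1)] by blast
    have "r N < r (Suc N)" using x(2) by (simp add: strict_mono_def)
    then have "\<rho> (X (r N)) (X (r (Suc N))) \<ge> \<delta>" by (rule far)
    moreover have "\<rho> (X (r N)) (X (r (Suc N))) \<le> \<rho> (X (r N)) x + \<rho> x (X (r (Suc N)))"
      using tri XK x(1) by blast
    moreover have "\<rho> x (X (r (Suc N))) < \<delta>/2" using N[rule_format, of "Suc N"] sym[OF x(1) XK] by simp
    ultimately show False using N by force
  qed
  then obtain C where C: "finite C" "C \<subseteq> K" "\<forall>x\<in>K. \<exists>c\<in>C. \<rho> c x < \<delta>" by blast
  define ch where "ch = (\<lambda>c. SOME a. a \<in> A \<and> (\<forall>y\<in>K. \<rho> c y < \<delta> \<longrightarrow> y \<in> W a))"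
  have ch: "ch c \<in> A \<and> (\<forall>y\<in>K. \<rho> c y < \<delta> \<longrightarrow> y \<in> W (ch c))" if "c \<in> K" for c
    unfolding ch_def by (rule someI_ex) (use d that in blast)
  show ?thesis
  proof (intro exI conjI ballI)
    show "finite (ch ` C)" using C by simp
    show "ch ` C \<subseteq> A" using C ch by auto
    fix x assume "x \<in> K"
    then obtain c where "c \<in> C" "\<rho> c x < \<delta>" using C by blast
    then show "\<exists>a\<in>ch ` C. x \<in> W a" using ch C \<open>x \<in> K\<close> by blast
  qed
qed

lemma vnorm_L2: "vnorm d v = L2_set v {..<d}"
  by (simp add: vnorm_def L2_set_def)

lemma vnorm_nonneg: "0 \<le> vnorm d v"
  by (simp add: vnorm_L2)

lemma vnorm_ge_abs: "j < d \<Longrightarrow> \<bar>v j\<bar> \<le> vnorm d v"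
proof -
  assume "j < d"
  have "\<bar>v j\<bar> \<le> L2_set (\<lambda>j. \<bar>v j\<bar>) {..<d}" by (rule member_le_L2_set) (use \<open>j<d\<close> in auto)
  also have "\<dots> = vnorm d v" by (simp add: vnorm_L2 L2_set_def)
  finally show ?thesis .
qed

lemma vnorm_le_sum: "vnorm d v \<le> (\<Sum>j<d. \<bar>v j\<bar>)"
  by (simp add: vnorm_L2 L2_set_le_sum_abs)

lemma vnorm_triangle: "vnorm d (\<lambda>j. a j + b j) \<le> vnorm d a + vnorm d b"
  by (simp add: vnorm_L2 L2_set_triangle_ineq)

lemma vnorm_scale: "vnorm d (\<lambda>j. c * a j) = \<bar>c\<bar> * vnorm d a"
proof -
  have "vnorm d (\<lambda>j. c * a j) = sqrt (c\<^sup>2 * (\<Sum>j<d. (a j)\<^sup>2))"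
    by (simp add: vnorm_def power_mult_distrib sum_distrib_left)
  also have "\<dots> = \<bar>c\<bar> * vnorm d a" by (simp add: vnorm_def real_sqrt_mult)
  finally show ?thesis .
qed

lemma vnorm_uminus: "vnorm d (\<lambda>j. - a j) = vnorm d a"
  by (simp add: vnorm_def)

lemma vnorm_commute: "vnorm d (\<lambda>j. a j - b j) = vnorm d (\<lambda>j. b j - a j)"
  by (simp add: vnorm_def power2_commute)

lemma vnorm_diff_le: "vnorm d (\<lambda>j. a j - b j) \<le> vnorm d a + vnorm d b"
proof -
  have "vnorm d (\<lambda>j. a j + (-1) * b j) \<le> vnorm d a + vnorm d (\<lambda>j. (-1) * b j)" by (rule vnorm_triangle)
  then show ?thesis by (simp add: vnorm_scale vnorm_uminus)
qed

lemma vnorm_tri3: "vnorm d (\<lambda>j. a j - c j) \<le> vnorm d (\<lambda>j. a j - b j) + vnorm d (\<lambda>j. b j - c j)"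
  using vnorm_triangle[of d "\<lambda>j. a j - b j" "\<lambda>j. b j - c j"] by simp

lemma vnorm_sum: "finite L \<Longrightarrow> vnorm d (\<lambda>j. \<Sum>l\<in>L. f l j) \<le> (\<Sum>l\<in>L. vnorm d (f l))"
proof (induction L rule: finite_induct)
  case empty then show ?case by (simp add: vnorm_def)
next
  case (insert x F)
  have "vnorm d (\<lambda>j. \<Sum>l\<in>insert x F. f l j) = vnorm d (\<lambda>j. f x j + (\<Sum>l\<in>F. f l j))"
    using insert by simp
  also have "\<dots> \<le> vnorm d (f x) + vnorm d (\<lambda>j. \<Sum>l\<in>F. f l j)" by (rule vnorm_triangle)
  also have "\<dots> \<le> vnorm d (f x) + (\<Sum>l\<in>F. vnorm d (f l))" using insert by simp
  finally show ?case using insert by simp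
qed

lemma supdist_commute: "supdist t0 t1 d u v = supdist t0 t1 d v u"
  unfolding supdist_def by (rule SUP_cong[OF refl], rule vnorm_commute)

lemma supdist_bdd:
  assumes "\<forall>t\<in>{t0..t1}. vnorm d (u t) \<le> A" "\<forall>t\<in>{t0..t1}. vnorm d (v t) \<le> B"
  shows "bdd_above ((\<lambda>t. vnorm d (\<lambda>j. u t j - v t j)) ` {t0..t1})"
proof (rule bdd_aboveI2)
  fix t assume "t \<in> {t0..t1}"
  then show "vnorm d (\<lambda>j. u t j - v t j) \<le> A + B"
    using vnorm_diff_le[of d "u t" "v t"] assms by force
qed

lemma supdist_ge:
  assumes "\<forall>t\<in>{t0..t1}. vnorm d (u t) \<le> A" "\<forall>t\<in>{t0..t1}. vnorm d (v t) \<le> B" "t \<in> {t0..t1}"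
  shows "vnorm d (\<lambda>j. u t j - v t j) \<le> supdist t0 t1 d u v"
  unfolding supdist_def by (rule cSUP_upper[OF assms(3) supdist_bdd[OF assms(1,2)]])

lemma supdist_le:
  assumes "t0 \<le> t1" "\<And>t. t \<in> {t0..t1} \<Longrightarrow> vnorm d (\<lambda>j. u t j - v t j) \<le> c"
  shows "supdist t0 t1 d u v \<le> c"
  unfolding supdist_def by (rule cSUP_least) (use assms in auto)

lemma supdist_nonneg:
  assumes "t0 \<le> t1" "\<forall>t\<in>{t0..t1}. vnorm d (u t) \<le> A" "\<forall>t\<in>{t0..t1}. vnorm d (v t) \<le> B"
  shows "0 \<le> supdist t0 t1 d u v"
  using supdist_ge[OF assms(2,3), of t0] assms(1) vnorm_nonneg[of d] by (meson atLeastAtMost_iff order.refl order_trans)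

lemma supdist_tri:
  assumes "t0 \<le> t1" "\<forall>t\<in>{t0..t1}. vnorm d (u t) \<le> A" "\<forall>t\<in>{t0..t1}. vnorm d (v t) \<le> B"
     "\<forall>t\<in>{t0..t1}. vnorm d (w t) \<le> C"
  shows "supdist t0 t1 d u w \<le> supdist t0 t1 d u v + supdist t0 t1 d v w"
proof (rule supdist_le[OF assms(1)])
  fix t assume t: "t \<in> {t0..t1}"
  have "vnorm d (\<lambda>j. u t j - w t j) \<le> vnorm d (\<lambda>j. u t j - v t j) + vnorm d (\<lambda>j. v t j - w t j)"
    by (rule vnorm_tri3)
  also have "\<dots> \<le> supdist t0 t1 d u v + supdist t0 t1 d v w"
    using supdist_ge[OF assms(2,3) t] supdist_ge[OF assms(3,4) t] by linarith
  finally show "vnorm d (\<lambda>j. u t j - w t j) \<le> supdist t0 t1 d u v + supdist t0 t1 d v w" .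
qed

lemma supdist_refl: "t0 \<le> t1 \<Longrightarrow> supdist t0 t1 d u u = 0"
  unfolding supdist_def by (simp add: vnorm_def)

lemma U_seqcpt:
  assumes t: "t0 < t1" and adm: "admissible t0 t1 d Mk U"
  shows "seqcpt U (supdist t0 t1 d)"
  unfolding seqcpt_def
proof (intro allI impI)
  fix X :: "nat \<Rightarrow> real \<Rightarrow> nat \<Rightarrow> real" assume X: "\<forall>n. X n \<in> U"
  define S where "S = {t0..t1}"
  have US: "U \<subseteq> Cspace t0 t1 d" using adm by (simp add: admissible_def)
  have bnd: "\<forall>u\<in>U. \<forall>t\<in>S. vnorm d (u t) \<le> Mk" using adm by (simp add: admissible_def S_def)
  have eqc: "\<forall>t\<in>S. \<forall>e>0. \<exists>\<delta>>0. \<forall>s\<in>S. \<forall>u\<in>U. \<bar>s - t\<bar> < \<delta> \<longrightarrow> vnorm d (\<lambda>j. u s j - u t j) < e"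
    using adm by (simp add: admissible_def S_def)
  have closedU: "\<forall>u\<in>Cspace t0 t1 d. (\<forall>e>0. \<exists>v\<in>U. supdist t0 t1 d u v < e) \<longrightarrow> u \<in> U"
    using adm by (simp add: admissible_def)
  define P where "P = (\<lambda>j (Y::nat \<Rightarrow> real \<Rightarrow> nat \<Rightarrow> real). \<exists>g. continuous_on S g \<and>
      (\<forall>e>0. \<exists>N. \<forall>n\<ge>N. \<forall>t\<in>S. \<bar>Y n t j - g t\<bar> < e))"
  have ex: "\<exists>r::nat\<Rightarrow>nat. strict_mono r \<and> P j (Y \<circ> r)" if j: "j \<in> {..<d}" and Y: "\<forall>n. Y n \<in> U" for j Y
  proof -
    have "compact S" by (simp add: S_def)
    moreover have "\<And>n x. x \<in> S \<Longrightarrow> norm (Y n x j) \<le> Mk"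
      using bnd Y vnorm_ge_abs[of j d] j by (simp) (meson order_trans)
    moreover have "\<exists>\<delta>. 0 < \<delta> \<and> (\<forall>n y. y \<in> S \<and> norm (x - y) < \<delta> \<longrightarrow> norm (Y n x j - Y n y j) < e)"
      if xS: "x \<in> S" and e0: "0 < e" for x e
    proof -
      obtain \<delta> where "\<delta> > 0" and d: "\<forall>s\<in>S. \<forall>u\<in>U. \<bar>s - x\<bar> < \<delta> \<longrightarrow> vnorm d (\<lambda>j. u s j - u x j) < e"
        using eqc xS e0 by blast
      show ?thesis
      proof (intro exI conjI allI impI)
        show "0 < \<delta>" by fact
        fix n y assume "y \<in> S \<and> norm (x - y) < \<delta>"
        then have "vnorm d (\<lambda>j. Y n y j - Y n x j) < e" using d Y by (auto simp: abs_minus_commute)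
        moreover have "\<bar>Y n y j - Y n x j\<bar> \<le> vnorm d (\<lambda>j. Y n y j - Y n x j)"
          using vnorm_ge_abs[of j d "\<lambda>j. Y n y j - Y n x j"] j by simp
        ultimately show "norm (Y n x j - Y n y j) < e" by (simp add: abs_minus_commute)
      qed
    qed
    ultimately obtain g k where g: "continuous_on S g" "strict_mono (k :: nat \<Rightarrow> nat)"
        "\<And>e. 0 < e \<Longrightarrow> \<exists>N. \<forall>n x. n \<ge> N \<and> x \<in> S \<longrightarrow> norm (Y (k n) x j - g x) < e"
      using Arzela_Ascoli[of S "\<lambda>n x. Y n x j" Mk] by blast
    have "P j (Y \<circ> k)" unfolding P_def
    proof (intro exI[of _ g] conjI allI impI)
      show "continuous_on S g" by (rule g(1))
      fix e :: real assume "e > 0"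
      then obtain N where "\<forall>n x. N \<le> n \<and> x \<in> S \<longrightarrow> norm (Y (k n) x j - g x) < e" using g(3) by blast
      then show "\<exists>N. \<forall>n\<ge>N. \<forall>t\<in>S. \<bar>(Y \<circ> k) n t j - g t\<bar> < e" by auto
    qed
    then show ?thesis using g(2) by blast
  qed
  have mono: "P j (Y \<circ> r)" if jd: "j \<in> {..<d}" and PY: "P j Y" and sm: "strict_mono r" for j Y and r :: "nat \<Rightarrow> nat"
  proof -
    obtain g where g: "continuous_on S g" "\<forall>e>0. \<exists>N. \<forall>n\<ge>N. \<forall>t\<in>S. \<bar>Y n t j - g t\<bar> < e"
      using PY by (auto simp: P_def)
    show ?thesis unfolding P_def
    proof (intro exI[of _ g] conjI allI impI)
      show "continuous_on S g" by fact
      fix e :: real assume "e > 0"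
      then obtain N where "\<forall>n\<ge>N. \<forall>t\<in>S. \<bar>Y n t j - g t\<bar> < e" using g by blast
      then show "\<exists>N. \<forall>n\<ge>N. \<forall>t\<in>S. \<bar>(Y \<circ> r) n t j - g t\<bar> < e"
        using seq_suble[OF sm] by (metis comp_apply order_trans)
    qed
  qed
  obtain r :: "nat \<Rightarrow> nat" where r: "strict_mono r" "\<forall>j\<in>{..<d}. P j (X \<circ> r)"
    using nested_subseq[of "{..<d}" U P X] ex mono X by blast
  then obtain g where g: "\<And>j. j < d \<Longrightarrow> continuous_on S (g j)"
     "\<And>j. j < d \<Longrightarrow> \<forall>e>0. \<exists>N. \<forall>n\<ge>N. \<forall>t\<in>S. \<bar>X (r n) t j - g j t\<bar> < e"
  proof -
    have "\<forall>j\<in>{..<d}. \<exists>g. continuous_on S g \<and> (\<forall>e>0. \<exists>N. \<forall>n\<ge>N. \<forall>t\<in>S. \<bar>X (r n) t j - g t\<bar> < e)"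
      using r(2) by (simp add: P_def)
    then have "\<exists>g. \<forall>j\<in>{..<d}. continuous_on S (g j) \<and> (\<forall>e>0. \<exists>N. \<forall>n\<ge>N. \<forall>t\<in>S. \<bar>X (r n) t j - g j t\<bar> < e)"
      by (rule bchoice)
    then show ?thesis using that by auto
  qed
  define u where "u = (\<lambda>t j. if t \<in> S \<and> j < d then g j t else 0)"
  have conv: "\<exists>N. \<forall>n\<ge>N. supdist t0 t1 d (X (r n)) u < e" if e: "e > 0" for e
  proof -
    define e' where "e' = e / (real d + 1)"
    have e': "e' > 0" using e by (simp add: e'_def)
    have "\<forall>j<d. \<forall>\<^sub>F n in sequentially. \<forall>t\<in>S. \<bar>X (r n) t j - g j t\<bar> < e'"
      using g(2) e' by (simp add: eventually_sequentially)
    then have "\<forall>j\<in>{..<d}. \<forall>\<^sub>F n in sequentially. \<forall>t\<in>S. \<bar>X (r n) t j - g j t\<bar> < e'" by simp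
    then have "\<forall>\<^sub>F n in sequentially. \<forall>j\<in>{..<d}. \<forall>t\<in>S. \<bar>X (r n) t j - g j t\<bar> < e'"
      by (rule eventually_ball_finite[rotated]) simp
    then have "\<forall>\<^sub>F n in sequentially. \<forall>j<d. \<forall>t\<in>S. \<bar>X (r n) t j - g j t\<bar> < e'"
      by (rule eventually_mono) auto
    then obtain N where N: "\<forall>n\<ge>N. \<forall>j<d. \<forall>t\<in>S. \<bar>X (r n) t j - g j t\<bar> < e'"
      by (auto simp: eventually_sequentially)
    have "supdist t0 t1 d (X (r n)) u < e" if "n \<ge> N" for n
    proof -
      have "supdist t0 t1 d (X (r n)) u \<le> real d * e'"
      proof (rule supdist_le)
        show "t0 \<le> t1" using t by simp
        fix t assume "t \<in> {t0..t1}"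
        then have tS: "t \<in> S" by (simp add: S_def)
        have "vnorm d (\<lambda>j. X (r n) t j - u t j) \<le> (\<Sum>j<d. \<bar>X (r n) t j - u t j\<bar>)" by (rule vnorm_le_sum)
        also have "\<dots> \<le> (\<Sum>j<d. e')"
          by (rule sum_mono) (use N that tS in \<open>auto simp: u_def less_imp_le\<close>)
        finally show "vnorm d (\<lambda>j. X (r n) t j - u t j) \<le> real d * e'" by simp
      qed
      also have "\<dots> < e" using e unfolding e'_def by (simp add: field_simps)
      finally show ?thesis .
    qed
    then show ?thesis by blast
  qed
  have uC: "u \<in> Cspace t0 t1 d"
    unfolding Cspace_def
  proof (intro CollectI conjI allI impI)
    show "continuous_on {t0..t1} u"
    proof (rule continuous_on_coordinatewise_then_product)
      fix j
      show "continuous_on {t0..t1} (\<lambda>t. u t j)"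
      proof (cases "j < d")
        case True
        then show ?thesis using g(1)[OF True] by (auto simp: u_def S_def intro: continuous_on_cong[THEN iffD1])
      next
        case False then show ?thesis by (simp add: u_def)
      qed
    qed
    show "\<And>t j. d \<le> j \<Longrightarrow> u t j = 0" by (simp add: u_def)
    fix t :: real assume "t \<notin> {t0..t1}"
    then have nS: "t \<notin> S" by (simp add: S_def)
    then show "u t = (\<lambda>j. 0)" by (simp add: u_def)
  qed
  have "u \<in> U"
  proof -
    have "\<forall>e>0. \<exists>v\<in>U. supdist t0 t1 d u v < e"
    proof (intro allI impI)
      fix e :: real assume "e > 0"
      then obtain N where "\<forall>n\<ge>N. supdist t0 t1 d (X (r n)) u < e" using conv by blast
      then have "supdist t0 t1 d u (X (r N)) < e" using supdist_commute by (metis order_refl)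
      then show "\<exists>v\<in>U. supdist t0 t1 d u v < e" using X by blast
    qed
    then show ?thesis using closedU uC by blast
  qed
  then show "\<exists>x\<in>U. \<exists>r::nat\<Rightarrow>nat. strict_mono r \<and> (\<forall>e>0. \<exists>N. \<forall>n\<ge>N. supdist t0 t1 d (X (r n)) x < e)"
    using r(1) conv by blast
qed

locale game =
  fixes n :: nat and t0 t1 :: real and m :: "nat \<Rightarrow> nat" and M :: "nat \<Rightarrow> real"
    and U :: "nat \<Rightarrow> (real \<Rightarrow> nat \<Rightarrow> real) set"
  assumes n1: "1 \<le> n" and tt: "t0 < t1"
    and adm: "\<forall>k\<in>{1..n}. admissible t0 t1 (m k) (M k) (U k) \<and> convex_ctrl (U k)"
begin

definition K where "K = Prof n U"
definition dist_p where "dist_p p q = (\<Sum>k\<in>{1..n}. supdist t0 t1 (m k) (p k) (q k))"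

lemma admk: "k \<in> {1..n} \<Longrightarrow> admissible t0 t1 (m k) (M k) (U k)" using adm by blast
lemma convk: "k \<in> {1..n} \<Longrightarrow> convex_ctrl (U k)" using adm by blast

lemma Ubnd: "k \<in> {1..n} \<Longrightarrow> u \<in> U k \<Longrightarrow> \<forall>t\<in>{t0..t1}. vnorm (m k) (u t) \<le> M k"
  using admk by (auto simp: admissible_def)

lemma Une: "k \<in> {1..n} \<Longrightarrow> U k \<noteq> {}"
  using admk by (auto simp: admissible_def)

lemma Kcomp: "p \<in> K \<Longrightarrow> k \<in> {1..n} \<Longrightarrow> p k \<in> U k"
  by (simp add: K_def Prof_def)

lemma Kbnd: "p \<in> K \<Longrightarrow> k \<in> {1..n} \<Longrightarrow> \<forall>t\<in>{t0..t1}. vnorm (m k) (p k t) \<le> M k"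
  using Kcomp Ubnd by blast

lemma sd_nonneg: "p \<in> K \<Longrightarrow> q \<in> K \<Longrightarrow> k \<in> {1..n} \<Longrightarrow> 0 \<le> supdist t0 t1 (m k) (p k) (q k)"
  using supdist_nonneg[of t0 t1 "m k" "p k" "M k" "q k" "M k"] Kbnd tt by simp

lemma dist_nonneg: "p \<in> K \<Longrightarrow> q \<in> K \<Longrightarrow> 0 \<le> dist_p p q"
  unfolding dist_p_def by (rule sum_nonneg) (use sd_nonneg in auto)

lemma dist_sym: "dist_p p q = dist_p q p"
  unfolding dist_p_def using supdist_commute by metis

lemma dist_refl: "dist_p p p = 0"
  unfolding dist_p_def using supdist_refl tt by simp

lemma dist_tri: "p \<in> K \<Longrightarrow> q \<in> K \<Longrightarrow> r \<in> K \<Longrightarrow> dist_p p r \<le> dist_p p q + dist_p q r"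
  unfolding dist_p_def sum.distrib[symmetric]
  by (rule sum_mono, rule supdist_tri) (use tt Kbnd in auto)

lemma sd_le_dist: "p \<in> K \<Longrightarrow> q \<in> K \<Longrightarrow> k \<in> {1..n} \<Longrightarrow> supdist t0 t1 (m k) (p k) (q k) \<le> dist_p p q"
  unfolding dist_p_def
  by (rule member_le_sum) (use sd_nonneg in auto)

lemma upd_K: "p \<in> K \<Longrightarrow> i \<in> {1..n} \<Longrightarrow> v \<in> U i \<Longrightarrow> p(i := v) \<in> K"
  by (auto simp: K_def Prof_def)

lemma upd_dist: "p \<in> K \<Longrightarrow> q \<in> K \<Longrightarrow> i \<in> {1..n} \<Longrightarrow> v \<in> U i \<Longrightarrow> dist_p (p(i := v)) (q(i := v)) \<le> dist_p p q"
  unfolding dist_p_def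
proof (rule sum_mono)
  fix k assume "k \<in> {1..n}" "p \<in> K" "q \<in> K"
  then show "supdist t0 t1 (m k) ((p(i := v)) k) ((q(i := v)) k) \<le> supdist t0 t1 (m k) (p k) (q k)"
    using sd_nonneg supdist_refl tt by (cases "k = i") auto
qed

lemma K_seqcpt: "seqcpt K dist_p"
  unfolding seqcpt_def
proof (intro allI impI)
  fix X :: "nat \<Rightarrow> nat \<Rightarrow> real \<Rightarrow> nat \<Rightarrow> real" assume X: "\<forall>i. X i \<in> K"
  define P where "P = (\<lambda>k (Y::nat \<Rightarrow> nat \<Rightarrow> real \<Rightarrow> nat \<Rightarrow> real). \<exists>u\<in>U k.
       \<forall>e>0. \<exists>N. \<forall>i\<ge>N. supdist t0 t1 (m k) (Y i k) u < e)"
  have ex: "\<exists>r::nat\<Rightarrow>nat. strict_mono r \<and> P k (Y \<circ> r)" if k: "k \<in> {1..n}" and Y: "\<forall>i. Y i \<in> K" for k Y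
  proof -
    have "seqcpt (U k) (supdist t0 t1 (m k))" using U_seqcpt[OF tt admk[OF k]] .
    then have H: "\<And>Z. (\<forall>i. Z i \<in> U k) \<Longrightarrow> \<exists>x\<in>U k. \<exists>r::nat\<Rightarrow>nat. strict_mono r \<and> (\<forall>e>0. \<exists>N. \<forall>i\<ge>N. supdist t0 t1 (m k) (Z (r i)) x < e)"
      unfolding seqcpt_def by blast
    have "\<forall>i. Y i k \<in> U k" using Y k Kcomp by blast
    from H[OF this] obtain u and r :: "nat \<Rightarrow> nat" where "u \<in> U k" "strict_mono r"
       "\<forall>e>0. \<exists>N. \<forall>i\<ge>N. supdist t0 t1 (m k) (Y (r i) k) u < e"
      by blast
    then show ?thesis unfolding P_def by (intro exI[of _ r]) auto
  qed
  have mono: "P k (Y \<circ> r)" if "k \<in> {1..n}" and PY: "P k Y" and sm: "strict_mono r" for k Y and r :: "nat \<Rightarrow> nat"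
  proof -
    obtain u where u: "u \<in> U k" "\<forall>e>0. \<exists>N. \<forall>i\<ge>N. supdist t0 t1 (m k) (Y i k) u < e"
      using PY by (auto simp: P_def)
    show ?thesis unfolding P_def
    proof (intro bexI[of _ u] allI impI)
      fix e :: real assume "e > 0"
      then obtain N where "\<forall>i\<ge>N. supdist t0 t1 (m k) (Y i k) u < e" using u by blast
      then show "\<exists>N. \<forall>i\<ge>N. supdist t0 t1 (m k) ((Y \<circ> r) i k) u < e"
        using seq_suble[OF sm] by (metis comp_apply order_trans)
    qed (rule u(1))
  qed
  obtain r :: "nat \<Rightarrow> nat" where r: "strict_mono r" "\<forall>k\<in>{1..n}. P k (X \<circ> r)"
    using nested_subseq[of "{1..n}" K P X] ex mono X by blast
  obtain u where u: "\<And>k. k \<in> {1..n} \<Longrightarrow> u k \<in> U k"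
     "\<And>k. k \<in> {1..n} \<Longrightarrow> \<forall>e>0. \<exists>N. \<forall>i\<ge>N. supdist t0 t1 (m k) (X (r i) k) (u k) < e"
  proof -
    have "\<forall>k\<in>{1..n}. \<exists>u\<in>U k. \<forall>e>0. \<exists>N. \<forall>i\<ge>N. supdist t0 t1 (m k) (X (r i) k) u < e"
      using r(2) by (simp add: P_def)
    then have "\<forall>k\<in>{1..n}. \<exists>u. u \<in> U k \<and> (\<forall>e>0. \<exists>N. \<forall>i\<ge>N. supdist t0 t1 (m k) (X (r i) k) u < e)"
      by blast
    then have "\<exists>u. \<forall>k\<in>{1..n}. u k \<in> U k \<and> (\<forall>e>0. \<exists>N. \<forall>i\<ge>N. supdist t0 t1 (m k) (X (r i) k) (u k) < e)"
      by (rule bchoice)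
    then obtain u where "\<forall>k\<in>{1..n}. u k \<in> U k \<and> (\<forall>e>0. \<exists>N. \<forall>i\<ge>N. supdist t0 t1 (m k) (X (r i) k) (u k) < e)"
      by blast
    then show ?thesis using that[of u] by blast
  qed
  define x where "x = (\<lambda>k. if k \<in> {1..n} then u k else (\<lambda>t j. 0))"
  have xK: "x \<in> K" using u(1) by (auto simp: K_def Prof_def x_def)
  have "\<exists>N. \<forall>i\<ge>N. dist_p (X (r i)) x < e" if e: "e > 0" for e
  proof -
    define e' where "e' = e / (real n + 1)"
    have e': "e' > 0" using e by (simp add: e'_def)
    have "\<forall>k\<in>{1..n}. \<forall>\<^sub>F i in sequentially. supdist t0 t1 (m k) (X (r i) k) (u k) < e'"
      using u(2) e' by (simp add: eventually_sequentially)
    then have "\<forall>\<^sub>F i in sequentially. \<forall>k\<in>{1..n}. supdist t0 t1 (m k) (X (r i) k) (u k) < e'"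
      by (rule eventually_ball_finite[rotated]) simp
    then obtain N where N: "\<forall>i\<ge>N. \<forall>k\<in>{1..n}. supdist t0 t1 (m k) (X (r i) k) (u k) < e'"
      by (auto simp: eventually_sequentially)
    have "dist_p (X (r i)) x < e" if "i \<ge> N" for i
    proof -
      have "dist_p (X (r i)) x \<le> (\<Sum>k\<in>{1..n}. e')"
        unfolding dist_p_def by (rule sum_mono) (use N that in \<open>auto simp: x_def less_imp_le\<close>)
      also have "\<dots> < e" using e n1 unfolding e'_def by (simp add: field_simps)
      finally show ?thesis .
    qed
    then show ?thesis by blast
  qed
  then show "\<exists>x\<in>K. \<exists>r::nat\<Rightarrow>nat. strict_mono r \<and> (\<forall>e>0. \<exists>N. \<forall>n\<ge>N. dist_p (X (r n)) x < e)"
    using xK r(1) by blast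
qed

end

definition comb :: "nat \<Rightarrow> (nat \<Rightarrow> real) \<Rightarrow> (nat \<Rightarrow> real \<Rightarrow> nat \<Rightarrow> real) \<Rightarrow> real \<Rightarrow> nat \<Rightarrow> real" where
  "comb N a V = (\<lambda>t j. \<Sum>l<N. a l * V l t j)"

lemma comb_in:
  assumes C: "\<forall>u\<in>C. \<forall>v\<in>C. \<forall>l\<in>{0..1}. cmb l u v \<in> C"
  shows "(\<forall>l<N. a l \<ge> 0) \<Longrightarrow> (\<Sum>l<N. a l) = 1 \<Longrightarrow> (\<forall>l<N. a l > 0 \<longrightarrow> V l \<in> C) \<Longrightarrow> comb N a V \<in> C"
proof (induction N arbitrary: a)
  case 0 then show ?case by simp
next
  case (Suc N)
  define s where "s = (\<Sum>l<N. a l)"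
  have s0: "s \<ge> 0" unfolding s_def using Suc.prems(1) by (intro sum_nonneg) simp
  have aN: "a N = 1 - s" using Suc.prems(2) by (simp add: s_def)
  show ?case
  proof (cases "s = 0")
    case True
    then have z: "\<forall>l<N. a l = 0" using Suc.prems(1) unfolding s_def
      by (subst (asm) sum_nonneg_eq_0_iff) auto
    then have "comb (Suc N) a V = V N" using aN True by (simp add: comb_def)
    moreover have "V N \<in> C" using Suc.prems(3) aN True by simp
    ultimately show ?thesis by simp
  next
    case False
    then have sp: "s > 0" using s0 by simp
    define a' where "a' = (\<lambda>l. a l / s)"
    have IH: "comb N a' V \<in> C"
    proof (rule Suc.IH)
      show "\<forall>l<N. 0 \<le> a' l" using Suc.prems(1) sp by (simp add: a'_def)
      show "(\<Sum>l<N. a' l) = 1" using sp by (simp add: a'_def s_def[symmetric] sum_divide_distrib[symmetric])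
      show "\<forall>l<N. 0 < a' l \<longrightarrow> V l \<in> C" using Suc.prems(3) sp by (simp add: a'_def zero_less_divide_iff)
    qed
    show ?thesis
    proof (cases "a N = 0")
      case True
      then have "s = 1" using aN by simp
      then have "comb (Suc N) a V = comb N a' V" using True by (simp add: comb_def a'_def)
      then show ?thesis using IH by simp
    next
      case False
      then have "a N > 0" using Suc.prems(1) by (simp add: order_less_le)
      then have VN: "V N \<in> C" using Suc.prems(3) by simp
      have s1: "s \<le> 1" using aN \<open>a N > 0\<close> by simp
      have "comb (Suc N) a V = cmb s (comb N a' V) (V N)"
        unfolding comb_def cmb_def a'_def using sp aN
        by (auto simp: fun_eq_iff sum_distrib_left)
      then show ?thesis using C IH VN s0 s1 by simp
    qed
  qed
qed

lemma comb_diff: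
  "vnorm d (\<lambda>j. comb N a V t j - comb N b V t j) \<le> (\<Sum>l<N. \<bar>a l - b l\<bar> * vnorm d (V l t))"
proof -
  have "(\<lambda>j. comb N a V t j - comb N b V t j) = (\<lambda>j. \<Sum>l<N. (a l - b l) * V l t j)"
    by (simp add: comb_def fun_eq_iff sum_subtractf[symmetric] left_diff_distrib)
  then have "vnorm d (\<lambda>j. comb N a V t j - comb N b V t j) = vnorm d (\<lambda>j. \<Sum>l<N. (a l - b l) * V l t j)"
    by simp
  also have "\<dots> \<le> (\<Sum>l<N. vnorm d (\<lambda>j. (a l - b l) * V l t j))" by (rule vnorm_sum) simp
  also have "\<dots> = (\<Sum>l<N. \<bar>a l - b l\<bar> * vnorm d (V l t))" by (simp add: vnorm_scale)
  finally show ?thesis .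
qed

lemma div_lip:
  fixes x x' a a' :: real
  assumes "0 \<le> x'" "x' \<le> 1" "1 \<le> a" "1 \<le> a'"
  shows "\<bar>x / a - x' / a'\<bar> \<le> \<bar>x - x'\<bar> + \<bar>a - a'\<bar>"
proof -
  have "x / a - x' / a' = (x - x') / a + x' * (a' - a) / (a * a')"
    using assms by (simp add: field_simps)
  also have "\<bar>\<dots>\<bar> \<le> \<bar>(x - x') / a\<bar> + \<bar>x' * (a' - a) / (a * a')\<bar>" by (rule abs_triangle_ineq)
  also have "\<bar>(x - x') / a\<bar> \<le> \<bar>x - x'\<bar>"
  proof -
    have "\<bar>x - x'\<bar> / a \<le> \<bar>x - x'\<bar> / 1" by (rule divide_left_mono) (use assms in auto)
    then show ?thesis using assms by (simp add: abs_div)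
  qed
  also have "\<bar>x' * (a' - a) / (a * a')\<bar> \<le> \<bar>a - a'\<bar>"
  proof -
    have "\<bar>x' * (a' - a) / (a * a')\<bar> = x' * \<bar>a' - a\<bar> / (a * a')" using assms by (simp add: abs_mult abs_div)
    also have "\<dots> \<le> \<bar>a' - a\<bar> / (a * a')" using assms by (simp add: divide_right_mono mult_left_le_one_le)
    also have "\<dots> \<le> \<bar>a' - a\<bar>"
    proof -
      have "1 \<le> a * a'" using assms mult_mono[of 1 a 1 a'] by simp
      then have "\<bar>a' - a\<bar> / (a * a') \<le> \<bar>a' - a\<bar> / 1" by (intro divide_left_mono) auto
      then show ?thesis by simp
    qed
    finally show ?thesis by (simp add: abs_minus_commute)
  qed
  finally show ?thesis by simp
qed

locale game2 = game +
  fixes G :: "nat \<Rightarrow> (nat \<Rightarrow> real \<Rightarrow> nat \<Rightarrow> real) \<Rightarrow> real \<times> real"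
  assumes contG: "\<forall>i\<in>{1..n}. icont_prof n t0 t1 m U (G i)"
    and qcG: "\<forall>i\<in>{1..n}. \<forall>us\<in>Prof n U. gqc (U i) (\<lambda>u. G i (us(i := u)))"
begin

definition lo where "lo i p = fst (G i p)"

lemma lo_cont:
  assumes i: "i \<in> {1..n}" and p: "p \<in> K" and e: "e > 0"
  shows "\<exists>\<delta>>0. \<forall>q\<in>K. dist_p p q < \<delta> \<longrightarrow> \<bar>lo i q - lo i p\<bar> < e"
proof -
  have "icont_prof n t0 t1 m U (G i)" using contG i by blast
  then obtain \<delta> where d: "\<delta> > 0" and H: "\<forall>q\<in>Prof n U. (\<forall>k\<in>{1..n}. supdist t0 t1 (m k) (q k) (p k) < \<delta>) \<longrightarrow>
        (let D = gH_diff (G i q) (G i p) in -e < fst D \<and> snd D < e)"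
    using p e unfolding icont_prof_def K_def by blast
  show ?thesis
  proof (intro exI[of _ \<delta>] conjI ballI impI)
    show "\<delta> > 0" by fact
    fix q assume q: "q \<in> K" and dq: "dist_p p q < \<delta>"
    have "\<forall>k\<in>{1..n}. supdist t0 t1 (m k) (q k) (p k) < \<delta>"
      using sd_le_dist[OF p q] dq supdist_commute by (metis le_less_trans)
    then have "-e < fst (gH_diff (G i q) (G i p)) \<and> snd (gH_diff (G i q) (G i p)) < e"
      using H q unfolding K_def Let_def by blast
    then show "\<bar>lo i q - lo i p\<bar> < e" unfolding gH_diff_def lo_def by auto
  qed
qed

lemma qc_set:
  assumes i: "i \<in> {1..n}" and us: "us \<in> K"
  shows "\<forall>u\<in>{v\<in>U i. c < lo i (us(i:=v))}. \<forall>v\<in>{v\<in>U i. c < lo i (us(i:=v))}. \<forall>l\<in>{0..1}.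
           cmb l u v \<in> {v\<in>U i. c < lo i (us(i:=v))}"
proof (intro ballI)
  fix x1 x2 l assume x1: "x1 \<in> {v\<in>U i. c < lo i (us(i:=v))}" and x2: "x2 \<in> {v\<in>U i. c < lo i (us(i:=v))}"
    and l: "l \<in> {0..(1::real)}"
  have mixU: "cmb l x1 x2 \<in> U i" using convk[OF i] x1 x2 l unfolding convex_ctrl_def by blast
  have gq: "gqc (U i) (\<lambda>u. G i (us(i := u)))" using qcG i us by (simp add: K_def)
  let ?F = "\<lambda>u. G i (us(i := u))"
  have "c < lo i (us(i := cmb l x1 x2))"
  proof (rule ccontr)
    assume "\<not> ?thesis"
    then have mle: "fst (?F (cmb l x1 x2)) \<le> c" by (simp add: lo_def)
    have l1: "c < fst (?F x1)" and l2: "c < fst (?F x2)" using x1 x2 by (auto simp: lo_def)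
    define a where "a = (c + min (fst (?F x1)) (fst (?F x2))) / 2"
    define b where "b = max (max (snd (?F x1)) (snd (?F x2))) (max (snd (?F (cmb l x1 x2))) a) + 1"
    have ab: "valid_ival (a, b)" unfolding valid_ival_def b_def by simp
    have a1: "a < fst (?F x1)" and a2: "a < fst (?F x2)" using l1 l2 by (auto simp: a_def)
    have "fst (gH_diff (a, b) (?F x1)) < 0" using a1 by (simp add: gH_diff_def min_less_iff_disj)
    then have n1: "\<not> int_pos (gH_diff (a, b) (?F x1))" by (simp add: int_pos_def)
    have "fst (gH_diff (a, b) (?F x2)) < 0" using a2 by (simp add: gH_diff_def min_less_iff_disj)
    then have n2: "\<not> int_pos (gH_diff (a, b) (?F x2))" by (simp add: int_pos_def)
    have am: "fst (?F (cmb l x1 x2)) < a" using l1 l2 mle by (simp add: a_def)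
    have bm: "snd (?F (cmb l x1 x2)) < b" by (simp add: b_def)
    have "0 < fst (gH_diff (a, b) (?F (cmb l x1 x2)))" using am bm by (simp add: gH_diff_def)
    moreover have "valid_ival (gH_diff (a, b) (?F (cmb l x1 x2)))"
      by (simp add: gH_diff_def valid_ival_def min_le_iff_disj)
    ultimately have p3: "int_pos (gH_diff (a, b) (?F (cmb l x1 x2)))" by (simp add: int_pos_def)
    have x1U: "x1 \<in> U i" and x2U: "x2 \<in> U i" using x1 x2 by auto
    have "\<forall>A. \<forall>l\<in>{0..1}. valid_ival A \<longrightarrow>
      \<not> int_pos (gH_diff A (?F x1)) \<longrightarrow> \<not> int_pos (gH_diff A (?F x2)) \<longrightarrow>
      \<not> int_pos (gH_diff A (?F (cmb l x1 x2)))"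
      using gq x1U x2U unfolding gqc_def by blast
    then show False using l ab n1 n2 p3 by blast
  qed
  then show "cmb l x1 x2 \<in> {v\<in>U i. c < lo i (us(i:=v))}" using mixU by simp
qed

definition nb where "nb p = (INF e\<in>{0<..}. principal {q\<in>K. dist_p p q < e})"

lemma eventually_nb: "eventually P (nb p) \<longleftrightarrow> (\<exists>e>0. \<forall>q\<in>K. dist_p p q < e \<longrightarrow> P q)"
proof -
  have "(1::real) \<in> {0<..}" by simp
  then have ne: "{0::real<..} \<noteq> {}" by (metis empty_iff)
  have dir: "\<exists>x\<in>{0<..}. principal {q \<in> K. dist_p p q < x}
      \<le> inf (principal {q \<in> K. dist_p p q < a}) (principal {q \<in> K. dist_p p q < b})"
    if "a \<in> {0<..}" "b \<in> {0<..}" for a b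
  proof (rule bexI[of _ "min a b"])
    show "min a b \<in> {0<..}" using that by simp
    show "principal {q \<in> K. dist_p p q < min a b}
      \<le> inf (principal {q \<in> K. dist_p p q < a}) (principal {q \<in> K. dist_p p q < b})"
      unfolding inf_principal principal_le_iff by auto
  qed
  have "eventually P (nb p) \<longleftrightarrow> (\<exists>b\<in>{0<..}. eventually P (principal {q \<in> K. dist_p p q < b}))"
    unfolding nb_def by (rule eventually_INF_base[OF ne dir])
  also have "\<dots> \<longleftrightarrow> (\<exists>e>0. \<forall>q\<in>K. dist_p p q < e \<longrightarrow> P q)"
    unfolding eventually_principal by fastforce
  finally show ?thesis .
qed

lemma tendsto_nb: "((f \<longlongrightarrow> f p) (nb p)) \<longleftrightarrow> (\<forall>e>0. \<exists>\<delta>>0. \<forall>q\<in>K. dist_p p q < \<delta> \<longrightarrow> \<bar>f q - f p\<bar> < (e::real))"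
  unfolding tendsto_iff eventually_nb dist_real_def by simp

lemma tendsto_nbI:
  assumes "l = f p" "\<And>e. e > 0 \<Longrightarrow> \<exists>\<delta>>0. \<forall>q\<in>K. dist_p p q < \<delta> \<longrightarrow> \<bar>f q - f p\<bar> < (e::real)"
  shows "(f \<longlongrightarrow> l) (nb p)"
  using assms tendsto_nb by blast

lemma tendsto_nbD:
  assumes "(f \<longlongrightarrow> l) (nb p)" "l = f p" "e > 0"
  shows "\<exists>\<delta>>0. \<forall>q\<in>K. dist_p p q < \<delta> \<longrightarrow> \<bar>f q - f p\<bar> < (e::real)"
  using assms tendsto_nb by blast

end

context game2 begin

lemma phi_cont:
  assumes i: "i \<in> {1..n}" and v: "v \<in> U i" and p: "p \<in> K"
  shows "((\<lambda>q. lo i (q(i := v)) - lo i q) \<longlongrightarrow> lo i (p(i := v)) - lo i p) (nb p)"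
proof (rule tendsto_nbI[OF refl])
  fix e :: real assume e: "e > 0"
  obtain d1 where d1: "d1 > 0" "\<forall>q\<in>K. dist_p (p(i:=v)) q < d1 \<longrightarrow> \<bar>lo i q - lo i (p(i:=v))\<bar> < e/2"
    using lo_cont[OF i upd_K[OF p i v], of "e/2"] e by auto
  obtain d2 where d2: "d2 > 0" "\<forall>q\<in>K. dist_p p q < d2 \<longrightarrow> \<bar>lo i q - lo i p\<bar> < e/2"
    using lo_cont[OF i p, of "e/2"] e by auto
  show "\<exists>\<delta>>0. \<forall>q\<in>K. dist_p p q < \<delta> \<longrightarrow>
      \<bar>lo i (q(i := v)) - lo i q - (lo i (p(i := v)) - lo i p)\<bar> < e"
  proof (intro exI[of _ "min d1 d2"] conjI ballI impI)
    show "0 < min d1 d2" using d1 d2 by simp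
    fix q assume q: "q \<in> K" and dq: "dist_p p q < min d1 d2"
    have "dist_p (p(i:=v)) (q(i:=v)) < d1" using upd_dist[OF p q i v] dq by simp
    then have "\<bar>lo i (q(i:=v)) - lo i (p(i:=v))\<bar> < e/2" using d1 upd_K[OF q i v] by blast
    moreover have "\<bar>lo i q - lo i p\<bar> < e/2" using d2 q dq by simp
    ultimately show "\<bar>lo i (q(i := v)) - lo i q - (lo i (p(i := v)) - lo i p)\<bar> < e" by linarith
  qed
qed

end

locale game3 = game2 +
  fixes N :: nat and idx :: "nat \<Rightarrow> nat" and vv :: "nat \<Rightarrow> real \<Rightarrow> nat \<Rightarrow> real"
  assumes idxv: "\<And>l. l < N \<Longrightarrow> idx l \<in> {1..n} \<and> vv l \<in> U (idx l)"
    and covl: "\<And>x. x \<in> K \<Longrightarrow> \<exists>l<N. lo (idx l) x < lo (idx l) (x(idx l := vv l))"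
begin

definition beta where "beta l us = max 0 (lo (idx l) (us(idx l := vv l)) - lo (idx l) us)"
definition ssum where "ssum k us = (\<Sum>l<N. if idx l = k then beta l us else 0)"
definition cmax where "cmax us = Sup ((\<lambda>k. ssum k us) ` {1..n})"
definition hh where "hh us = (\<lambda>l. if l < N then beta l us / cmax us else 0)"

lemma beta_nonneg: "0 \<le> beta l us" by (simp add: beta_def)
lemma ssum_nonneg: "0 \<le> ssum k us" unfolding ssum_def by (rule sum_nonneg) (simp add: beta_nonneg)

lemma fin_ne: "finite ((\<lambda>k. ssum k us) ` {1..n})" "(\<lambda>k. ssum k us) ` {1..n} \<noteq> {}"
  using n1 by auto

lemma cmax_ge: "k \<in> {1..n} \<Longrightarrow> ssum k us \<le> cmax us"
  unfolding cmax_def by (rule cSup_upper) (use fin_ne in auto)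

lemma cmax_att: "\<exists>k\<in>{1..n}. cmax us = ssum k us"
proof -
  have "cmax us = Max ((\<lambda>k. ssum k us) ` {1..n})" unfolding cmax_def using fin_ne by (rule cSup_eq_Max)
  moreover have "Max ((\<lambda>k. ssum k us) ` {1..n}) \<in> (\<lambda>k. ssum k us) ` {1..n}" using fin_ne by (rule Max_in)
  ultimately show ?thesis by auto
qed

lemma beta_le_ssum: "l < N \<Longrightarrow> beta l us \<le> ssum (idx l) us"
proof -
  assume l: "l < N"
  have "(if idx l = idx l then beta l us else 0) \<le> (\<Sum>l'<N. if idx l' = idx l then beta l' us else 0)"
    by (rule member_le_sum) (use l beta_nonneg in auto)
  then show ?thesis by (simp add: ssum_def)
qed

lemma cmax_pos: "us \<in> K \<Longrightarrow> 0 < cmax us"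
proof -
  assume us: "us \<in> K"
  obtain l where l: "l < N" "lo (idx l) us < lo (idx l) (us(idx l := vv l))" using covl[OF us] by blast
  then have "0 < beta l us" by (simp add: beta_def)
  also have "\<dots> \<le> ssum (idx l) us" using beta_le_ssum l by simp
  also have "\<dots> \<le> cmax us" using cmax_ge idxv l by simp
  finally show ?thesis .
qed

lemma hh_range: "us \<in> K \<Longrightarrow> \<forall>l<N. 0 \<le> hh us l \<and> hh us l \<le> 1"
proof (intro allI impI)
  fix l assume us: "us \<in> K" and l: "l < N"
  have c: "0 < cmax us" using cmax_pos[OF us] .
  have "beta l us \<le> cmax us" using beta_le_ssum[OF l] cmax_ge[of "idx l"] idxv[OF l] by (meson order_trans)
  then show "0 \<le> hh us l \<and> hh us l \<le> 1" using c l beta_nonneg[of l us] by (simp add: hh_def divide_le_eq_1)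
qed

lemma beta_tendsto: "l < N \<Longrightarrow> p \<in> K \<Longrightarrow> ((\<lambda>q. beta l q) \<longlongrightarrow> beta l p) (nb p)"
  unfolding beta_def using phi_cont[of "idx l" "vv l" p] idxv by (intro tendsto_max tendsto_const) auto

lemma ssum_tendsto: "p \<in> K \<Longrightarrow> ((\<lambda>q. ssum k q) \<longlongrightarrow> ssum k p) (nb p)"
  unfolding ssum_def
proof (rule tendsto_sum)
  fix l assume "l \<in> {..<N}" "p \<in> K"
  then show "((\<lambda>q. if idx l = k then beta l q else 0) \<longlongrightarrow> (if idx l = k then beta l p else 0)) (nb p)"
    using beta_tendsto by (cases "idx l = k") auto
qed

lemma cmax_tendsto: "p \<in> K \<Longrightarrow> ((\<lambda>q. cmax q) \<longlongrightarrow> cmax p) (nb p)"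
  unfolding cmax_def by (rule tendsto_Sup) (auto intro: ssum_tendsto)

lemma hh_tendsto: "p \<in> K \<Longrightarrow> ((\<lambda>q. hh q l) \<longlongrightarrow> hh p l) (nb p)"
  unfolding hh_def
proof (cases "l < N")
  case True
  assume p: "p \<in> K"
  have "((\<lambda>q. beta l q / cmax q) \<longlongrightarrow> beta l p / cmax p) (nb p)"
    by (rule tendsto_divide[OF beta_tendsto[OF True p] cmax_tendsto[OF p]]) (use cmax_pos[OF p] in simp)
  then show "((\<lambda>q. if l < N then beta l q / cmax q else 0) \<longlongrightarrow> (if l < N then beta l p / cmax p else 0)) (nb p)"
    using True by simp
qed simp

lemma hh_cont: "p \<in> K \<Longrightarrow> e > 0 \<Longrightarrow> \<exists>\<delta>>0. \<forall>q\<in>K. dist_p p q < \<delta> \<longrightarrow> \<bar>hh q l - hh p l\<bar> < e"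
  using tendsto_nbD[OF hh_tendsto[of p l] refl] by blast

lemma hh_unif: "e > 0 \<Longrightarrow> \<exists>\<delta>>0. \<forall>x\<in>K. \<forall>y\<in>K. dist_p x y < \<delta> \<longrightarrow> (\<forall>l<N. \<bar>hh x l - hh y l\<bar> < e)"
proof -
  assume e: "e > 0"
  have "\<forall>l<N. \<exists>\<delta>>0. \<forall>x\<in>K. \<forall>y\<in>K. dist_p x y < \<delta> \<longrightarrow> \<bar>hh x l - hh y l\<bar> < e"
  proof (intro allI impI)
    fix l
    show "\<exists>\<delta>>0. \<forall>x\<in>K. \<forall>y\<in>K. dist_p x y < \<delta> \<longrightarrow> \<bar>hh x l - hh y l\<bar> < e"
      by (rule seq_unif_cont[OF K_seqcpt, of "\<lambda>q. hh q l"])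
         (use dist_sym dist_tri hh_cont e in auto)
  qed
  then have "\<exists>\<delta>>0. \<forall>l<N. \<forall>x\<in>K. \<forall>y\<in>K. dist_p x y < \<delta> \<longrightarrow> \<bar>hh x l - hh y l\<bar> < e"
    by (rule finite_delta) auto
  then show ?thesis by blast
qed

end

context game3 begin

definition inQ where "inQ (x::nat \<Rightarrow> real) \<longleftrightarrow> (\<forall>l<N. 0 \<le> x l \<and> x l \<le> 1)"
definition w0 where "w0 k = (SOME w. w \<in> U k)"
definition sig where "sig k x = (\<Sum>l<N. if idx l = k then x l else 0)"
definition aa where "aa k x = max 1 (sig k x)"
definition wt where "wt k x l = (if l < N then (if idx l = k then x l / aa k x else 0) else max 0 (1 - sig k x) / aa k x)"
definition VV where "VV k l = (if l < N \<and> idx l = k then vv l else w0 k)"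
definition gg where "gg x = (\<lambda>k. if k \<in> {1..n} then comb (Suc N) (wt k x) (VV k) else (\<lambda>t j. 0))"

lemma w0_in: "k \<in> {1..n} \<Longrightarrow> w0 k \<in> U k"
  unfolding w0_def using Une by (simp add: some_in_eq)

lemma VV_in: "k \<in> {1..n} \<Longrightarrow> VV k l \<in> U k"
  using w0_in idxv by (auto simp: VV_def)

lemma sig_nonneg: "inQ x \<Longrightarrow> 0 \<le> sig k x"
  unfolding sig_def inQ_def by (rule sum_nonneg) auto

lemma wt_nonneg: "inQ x \<Longrightarrow> 0 \<le> wt k x l"
  unfolding wt_def aa_def inQ_def by auto

lemma wt_sum: "inQ x \<Longrightarrow> (\<Sum>l<Suc N. wt k x l) = 1"
proof -
  assume x: "inQ x"
  have "(\<Sum>l<Suc N. wt k x l) = (\<Sum>l<N. wt k x l) + wt k x N" by simp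
  also have "(\<Sum>l<N. wt k x l) = (\<Sum>l<N. (if idx l = k then x l else 0) / aa k x)"
    by (rule sum.cong) (auto simp: wt_def)
  also have "\<dots> = sig k x / aa k x" by (simp add: sig_def sum_divide_distrib)
  also have "wt k x N = max 0 (1 - sig k x) / aa k x" by (simp add: wt_def)
  also have "sig k x / aa k x + max 0 (1 - sig k x) / aa k x = (sig k x + max 0 (1 - sig k x)) / aa k x"
    by (simp add: add_divide_distrib)
  also have "\<dots> = 1" using sig_nonneg[OF x, of k] by (simp add: aa_def max_def)
  finally show ?thesis .
qed

lemma gg_K: "inQ x \<Longrightarrow> gg x \<in> K"
proof -
  assume x: "inQ x"
  have "comb (Suc N) (wt k x) (VV k) \<in> U k" if k: "k \<in> {1..n}" for k
    by (rule comb_in) (use convk[OF k] wt_nonneg[OF x] wt_sum[OF x] VV_in[OF k] in \<open>auto simp: convex_ctrl_def\<close>)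
  then show ?thesis by (auto simp: K_def Prof_def gg_def)
qed

lemma sig_lip:
  assumes "\<forall>l<N. \<bar>x l - y l\<bar> \<le> \<eta>"
  shows "\<bar>sig k x - sig k y\<bar> \<le> real N * \<eta>"
proof -
  have "\<bar>sig k x - sig k y\<bar> = \<bar>\<Sum>l<N. (if idx l = k then x l else 0) - (if idx l = k then y l else 0)\<bar>"
    by (simp add: sig_def sum_subtractf)
  also have "\<dots> \<le> (\<Sum>l<N. \<bar>(if idx l = k then x l else 0) - (if idx l = k then y l else 0)\<bar>)"
    by (rule sum_abs)
  also have "\<dots> \<le> (\<Sum>l<N. \<eta>)"
    by (rule sum_mono) (use assms in \<open>auto intro: order_trans[OF _ assms[rule_format]]\<close>)
  finally show ?thesis by simp
qed

lemma wt_lip: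
  assumes x: "inQ x" and y: "inQ y" and eta: "0 \<le> \<eta>" and d: "\<forall>l<N. \<bar>x l - y l\<bar> \<le> \<eta>"
  shows "\<bar>wt k x l - wt k y l\<bar> \<le> (2 * real N + 1) * \<eta>"
proof -
  have sl: "\<bar>sig k x - sig k y\<bar> \<le> real N * \<eta>" by (rule sig_lip[OF d])
  have al: "\<bar>aa k x - aa k y\<bar> \<le> real N * \<eta>" using sl unfolding aa_def by (simp add: abs_le_iff max_def)
  have a1: "1 \<le> aa k x" "1 \<le> aa k y" by (simp_all add: aa_def)
  have Neta: "0 \<le> real N * \<eta>" using eta by simp
  show ?thesis
  proof (cases "l < N")
    case True
    show ?thesis
    proof (cases "idx l = k")
      case True
      have "\<bar>x l / aa k x - y l / aa k y\<bar> \<le> \<bar>x l - y l\<bar> + \<bar>aa k x - aa k y\<bar>"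
        by (rule div_lip) (use y \<open>l < N\<close> a1 in \<open>auto simp: inQ_def\<close>)
      also have "\<dots> \<le> \<eta> + real N * \<eta>" using d \<open>l < N\<close> al by (simp add: add_mono)
      also have "\<dots> \<le> (2 * real N + 1) * \<eta>" using Neta by (simp add: algebra_simps)
      finally show ?thesis using \<open>l < N\<close> True by (simp add: wt_def)
    next
      case False
      then show ?thesis using \<open>l < N\<close> eta by (simp add: wt_def)
    qed
  next
    case False
    have "\<bar>max 0 (1 - sig k x) / aa k x - max 0 (1 - sig k y) / aa k y\<bar>
        \<le> \<bar>max 0 (1 - sig k x) - max 0 (1 - sig k y)\<bar> + \<bar>aa k x - aa k y\<bar>"
      by (rule div_lip) (use sig_nonneg[OF y] a1 in auto)
    also have "\<bar>max 0 (1 - sig k x) - max 0 (1 - sig k y)\<bar> \<le> real N * \<eta>"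
      using sl by (simp add: abs_le_iff max_def)
    also have "real N * \<eta> + \<bar>aa k x - aa k y\<bar> \<le> (2 * real N + 1) * \<eta>" using al eta by (simp add: algebra_simps)
    finally show ?thesis using False by (simp add: wt_def)
  qed
qed

definition Bg where "Bg = (\<Sum>k\<in>{1..n}. real (Suc N) * (2 * real N + 1) * M k)"

lemma M_pos: "k \<in> {1..n} \<Longrightarrow> 0 < M k"
  using admk by (simp add: admissible_def)

lemma Bg_nonneg: "0 \<le> Bg"
  unfolding Bg_def by (rule sum_nonneg) (use M_pos in \<open>auto intro!: mult_nonneg_nonneg less_imp_le\<close>)

lemma gg_lip:
  assumes x: "inQ x" and y: "inQ y" and eta: "0 \<le> \<eta>" and d: "\<forall>l<N. \<bar>x l - y l\<bar> \<le> \<eta>"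
  shows "dist_p (gg x) (gg y) \<le> Bg * \<eta>"
proof -
  have "supdist t0 t1 (m k) (gg x k) (gg y k) \<le> real (Suc N) * (2 * real N + 1) * M k * \<eta>"
    if k: "k \<in> {1..n}" for k
  proof (rule supdist_le)
    show "t0 \<le> t1" using tt by simp
    fix t assume t: "t \<in> {t0..t1}"
    have "vnorm (m k) (\<lambda>j. gg x k t j - gg y k t j) =
          vnorm (m k) (\<lambda>j. comb (Suc N) (wt k x) (VV k) t j - comb (Suc N) (wt k y) (VV k) t j)"
      using k by (simp add: gg_def)
    also have "\<dots> \<le> (\<Sum>l<Suc N. \<bar>wt k x l - wt k y l\<bar> * vnorm (m k) (VV k l t))" by (rule comb_diff)
    also have "\<dots> \<le> (\<Sum>l<Suc N. (2 * real N + 1) * \<eta> * M k)"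
    proof (rule sum_mono)
      fix l assume "l \<in> {..<Suc N}"
      have "vnorm (m k) (VV k l t) \<le> M k" using Ubnd[OF k VV_in[OF k]] t by blast
      then show "\<bar>wt k x l - wt k y l\<bar> * vnorm (m k) (VV k l t) \<le> (2 * real N + 1) * \<eta> * M k"
        using wt_lip[OF x y eta d, of k l] vnorm_nonneg
        by (intro mult_mono) (auto simp: eta)
    qed
    also have "\<dots> = real (Suc N) * (2 * real N + 1) * M k * \<eta>" by (simp add: algebra_simps)
    finally show "vnorm (m k) (\<lambda>j. gg x k t j - gg y k t j) \<le> real (Suc N) * (2 * real N + 1) * M k * \<eta>" .
  qed
  then have "dist_p (gg x) (gg y) \<le> (\<Sum>k\<in>{1..n}. real (Suc N) * (2 * real N + 1) * M k * \<eta>)"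
    unfolding dist_p_def by (intro sum_mono) auto
  also have "\<dots> = Bg * \<eta>" by (simp add: Bg_def sum_distrib_right)
  finally show ?thesis .
qed

lemma gg_unif: "e > 0 \<Longrightarrow> \<exists>\<eta>>0. \<forall>x y. inQ x \<longrightarrow> inQ y \<longrightarrow> (\<forall>l<N. \<bar>x l - y l\<bar> < \<eta>) \<longrightarrow> dist_p (gg x) (gg y) < e"
proof -
  assume e: "e > 0"
  define \<eta> where "\<eta> = e / (Bg + 1)"
  have eta: "\<eta> > 0" using e Bg_nonneg by (simp add: \<eta>_def)
  show ?thesis
  proof (intro exI[of _ \<eta>] conjI allI impI)
    show "\<eta> > 0" by fact
    fix x y assume x: "inQ x" and y: "inQ y" and d: "\<forall>l<N. \<bar>x l - y l\<bar> < \<eta>"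
    have "dist_p (gg x) (gg y) \<le> Bg * \<eta>" using gg_lip[OF x y] eta d by (simp add: less_imp_le)
    also have "\<dots> < e" using e Bg_nonneg unfolding \<eta>_def by (simp add: field_simps)
    finally show "dist_p (gg x) (gg y) < e" .
  qed
qed

end

context game3 begin

definition Fm where "Fm x = hh (gg x)"

lemma Fm_Q: "inQ x \<Longrightarrow> \<forall>l<N. 0 \<le> Fm x l \<and> Fm x l \<le> 1"
  unfolding Fm_def using hh_range gg_K by blast

lemma Fm_uc: "e > 0 \<Longrightarrow> \<exists>\<delta>>0. \<forall>x y. inQ x \<longrightarrow> inQ y \<longrightarrow> (\<forall>l<N. \<bar>x l - y l\<bar> < \<delta>) \<longrightarrow> (\<forall>l<N. \<bar>Fm x l - Fm y l\<bar> < e)"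
proof -
  assume e: "e > 0"
  obtain d where d: "d > 0" "\<forall>x\<in>K. \<forall>y\<in>K. dist_p x y < d \<longrightarrow> (\<forall>l<N. \<bar>hh x l - hh y l\<bar> < e)"
    using hh_unif[OF e] by blast
  obtain \<eta> where eta: "\<eta> > 0" "\<forall>x y. inQ x \<longrightarrow> inQ y \<longrightarrow> (\<forall>l<N. \<bar>x l - y l\<bar> < \<eta>) \<longrightarrow> dist_p (gg x) (gg y) < d"
    using gg_unif[OF d(1)] by blast
  show ?thesis
    using eta d gg_K unfolding Fm_def by blast
qed

theorem game3_False: False
proof -
  have "\<forall>j::nat. \<exists>z. inQ z \<and> (\<forall>l<N. \<bar>Fm z l - z l\<bar> < 1 / Suc j)"
  proof
    fix j :: nat
    have "\<exists>z. (\<forall>i<N. 0 \<le> z i \<and> z i \<le> 1) \<and> (\<forall>i<N. \<bar>Fm z i - z i\<bar> < 1 / Suc j)"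
      by (rule approx_brouwer) (use Fm_Q Fm_uc in \<open>auto simp: inQ_def\<close>)
    then show "\<exists>z. inQ z \<and> (\<forall>l<N. \<bar>Fm z l - z l\<bar> < 1 / Suc j)" by (simp add: inQ_def)
  qed
  then obtain Z where Z: "\<And>j. inQ (Z j)" "\<And>j l. l < N \<Longrightarrow> \<bar>Fm (Z j) l - Z j l\<bar> < 1 / Suc j"
    by metis
  define X where "X j = gg (Z j)" for j
  have XK: "\<forall>j. X j \<in> K" using gg_K Z(1) by (simp add: X_def)
  obtain us and r :: "nat \<Rightarrow> nat" where us: "us \<in> K" and r: "strict_mono r"
      and conv: "\<forall>e>0. \<exists>N. \<forall>j\<ge>N. dist_p (X (r j)) us < e"
    using K_seqcpt XK unfolding seqcpt_def by blast
  define lam where "lam = hh us"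
  have lamQ: "inQ lam" using hh_range[OF us] by (simp add: lam_def inQ_def)
  have gK: "gg lam \<in> K" using gg_K[OF lamQ] .
  have small: "dist_p us (gg lam) < e" if e: "e > 0" for e
  proof -
    obtain \<eta> where eta: "\<eta> > 0" "\<forall>x y. inQ x \<longrightarrow> inQ y \<longrightarrow> (\<forall>l<N. \<bar>x l - y l\<bar> < \<eta>) \<longrightarrow> dist_p (gg x) (gg y) < e/2"
      using gg_unif[of "e/2"] e by auto
    have "\<forall>l<N. \<exists>\<delta>>0. \<forall>q\<in>K. dist_p us q < \<delta> \<longrightarrow> \<bar>hh q l - hh us l\<bar> < \<eta>/2"
      using hh_cont[OF us, of "\<eta>/2"] eta(1) by simp
    then obtain \<delta> where dl: "\<delta> > 0" "\<forall>l<N. \<forall>q\<in>K. dist_p us q < \<delta> \<longrightarrow> \<bar>hh q l - hh us l\<bar> < \<eta>/2"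
      using finite_delta[of N "\<lambda>l \<delta>. \<forall>q\<in>K. dist_p us q < \<delta> \<longrightarrow> \<bar>hh q l - hh us l\<bar> < \<eta>/2"] by force
    obtain j0 where j0: "\<forall>j\<ge>j0. dist_p (X (r j)) us < min \<delta> (e/2)"
      using conv dl(1) e by (meson half_gt_zero min_less_iff_conj)
    obtain j1 :: nat where j1: "1 / Suc j1 < \<eta>/2"
      using eta(1) by (metis half_gt_zero_iff nat_approx_posE)
    define j where "j = max j0 j1"
    have rj: "j1 \<le> r j" using seq_suble[OF r, of j] j_def by simp
    then have "1 / Suc (r j) \<le> 1 / Suc j1" by (simp add: frac_le)
    have dX: "dist_p (X (r j)) us < min \<delta> (e/2)" using j0 j_def by simp
    have "\<forall>l<N. \<bar>Z (r j) l - lam l\<bar> < \<eta>"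
    proof (intro allI impI)
      fix l assume l: "l < N"
      have "\<bar>Fm (Z (r j)) l - Z (r j) l\<bar> < 1 / Suc (r j)" using Z(2)[OF l] .
      moreover have "\<bar>hh (X (r j)) l - hh us l\<bar> < \<eta>/2"
        using dl(2) l XK dX dist_sym by (metis min_less_iff_conj)
      moreover have "Fm (Z (r j)) l = hh (X (r j)) l" by (simp add: Fm_def X_def)
      ultimately show "\<bar>Z (r j) l - lam l\<bar> < \<eta>"
        using \<open>1 / Suc (r j) \<le> 1 / Suc j1\<close> j1 unfolding lam_def by linarith
    qed
    then have "dist_p (gg (Z (r j))) (gg lam) < e/2" using eta(2) Z(1) lamQ by blast
    then have "dist_p (X (r j)) (gg lam) < e/2" by (simp add: X_def)
    moreover have "dist_p us (X (r j)) < e/2" using dX dist_sym by (metis min_less_iff_conj)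
    moreover have "dist_p us (gg lam) \<le> dist_p us (X (r j)) + dist_p (X (r j)) (gg lam)"
      using dist_tri us XK gK by blast
    ultimately show ?thesis by linarith
  qed
  obtain k where k: "k \<in> {1..n}" "cmax us = ssum k us" using cmax_att by blast
  have cpos: "0 < cmax us" using cmax_pos[OF us] .
  have sigk: "sig k lam = 1"
  proof -
    have "sig k lam = (\<Sum>l<N. (if idx l = k then beta l us else 0) / cmax us)"
      unfolding sig_def lam_def hh_def by (rule sum.cong) auto
    also have "\<dots> = ssum k us / cmax us" by (simp add: ssum_def sum_divide_distrib)
    also have "\<dots> = 1" using k cpos by simp
    finally show ?thesis .
  qed
  have aak: "aa k lam = 1" using sigk by (simp add: aa_def)
  define C where "C = {v \<in> U k. lo k us < lo k (us(k := v))}"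
  have Cconv: "\<forall>u\<in>C. \<forall>v\<in>C. \<forall>l\<in>{0..1}. cmb l u v \<in> C" unfolding C_def by (rule qc_set[OF k(1) us])
  have combC: "comb (Suc N) (wt k lam) (VV k) \<in> C"
  proof (rule comb_in[OF Cconv])
    show "\<forall>l<Suc N. 0 \<le> wt k lam l" using wt_nonneg[OF lamQ] by simp
    show "(\<Sum>l<Suc N. wt k lam l) = 1" using wt_sum[OF lamQ] .
    show "\<forall>l<Suc N. 0 < wt k lam l \<longrightarrow> VV k l \<in> C"
    proof (intro allI impI)
      fix l assume l: "l < Suc N" and pos: "0 < wt k lam l"
      have lN: "l < N" and il: "idx l = k"
        using pos l sigk aak by (auto simp: wt_def split: if_splits)
      then have "0 < lam l" using pos aak by (simp add: wt_def)
      then have "0 < beta l us" using lN cpos by (simp add: lam_def hh_def zero_less_divide_iff)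
      then have "lo k us < lo k (us(k := vv l))" using il by (simp add: beta_def)
      moreover have "vv l \<in> U k" using idxv[OF lN] il by simp
      ultimately show "VV k l \<in> C" using lN il by (simp add: VV_def C_def)
    qed
  qed
  define p where "p = us(k := gg lam k)"
  have ggk: "gg lam k = comb (Suc N) (wt k lam) (VV k)" using k(1) by (simp add: gg_def)
  have pK: "p \<in> K" unfolding p_def by (rule upd_K[OF us k(1)]) (use Kcomp[OF gK k(1)] in simp)
  have lt: "lo k us < lo k p" using combC ggk by (simp add: C_def p_def)
  have dp: "dist_p us p \<le> dist_p us (gg lam)"
    unfolding dist_p_def
  proof (rule sum_mono)
    fix k' assume k': "k' \<in> {1..n}"
    show "supdist t0 t1 (m k') (us k') (p k') \<le> supdist t0 t1 (m k') (us k') (gg lam k')"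
      using sd_nonneg[OF us gK k'] supdist_refl[of t0 t1] tt by (cases "k' = k") (auto simp: p_def)
  qed
  obtain \<delta> where d: "\<delta> > 0" "\<forall>q\<in>K. dist_p us q < \<delta> \<longrightarrow> \<bar>lo k q - lo k us\<bar> < lo k p - lo k us"
    using lo_cont[OF k(1) us, of "lo k p - lo k us"] lt by auto
  have "dist_p us p < \<delta>" using dp small[OF d(1)] by linarith
  then have "\<bar>lo k p - lo k us\<bar> < lo k p - lo k us" using d pK by blast
  then show False by simp
qed

end

context game2 begin

theorem scalar_nash: "\<exists>us\<in>K. \<forall>i\<in>{1..n}. \<forall>v\<in>U i. lo i (us(i:=v)) \<le> lo i us"
proof (rule ccontr)
  assume H: "\<not> ?thesis"
  have impr: "\<exists>i\<in>{1..n}. \<exists>v\<in>U i. lo i x < lo i (x(i:=v))" if "x \<in> K" for x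
  proof -
    have "\<forall>x\<in>K. \<exists>i\<in>{1..n}. \<exists>v\<in>U i. lo i x < lo i (x(i:=v))" using H by (simp add: not_le)
    then show ?thesis using that by (rule bspec)
  qed
  define A where "A = {(i,v). i \<in> {1..n} \<and> v \<in> U i}"
  define W where "W = (\<lambda>a. {x. lo (fst a) x < lo (fst a) (x(fst a := snd a))})"
  have cov: "\<exists>a\<in>A. \<exists>e>0. \<forall>y\<in>K. dist_p x y < e \<longrightarrow> y \<in> W a" if x: "x \<in> K" for x
  proof -
    obtain i v where iv: "i \<in> {1..n}" "v \<in> U i" "lo i x < lo i (x(i:=v))" using impr[OF x] by blast
    define e where "e = lo i (x(i:=v)) - lo i x"
    have e: "e > 0" using iv by (simp add: e_def)
    obtain \<delta> where d: "\<delta> > 0" "\<forall>q\<in>K. dist_p x q < \<delta> \<longrightarrow>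
        \<bar>(lo i (q(i := v)) - lo i q) - (lo i (x(i := v)) - lo i x)\<bar> < e"
      using tendsto_nbD[OF phi_cont[OF iv(1,2) x] refl e] by blast
    show ?thesis
    proof (intro bexI[of _ "(i,v)"] exI[of _ \<delta>] conjI ballI impI)
      show "\<delta> > 0" by fact
      show "(i, v) \<in> A" using iv by (simp add: A_def)
      fix y assume "y \<in> K" "dist_p x y < \<delta>"
      then have "\<bar>(lo i (y(i := v)) - lo i y) - e\<bar> < e" using d by (simp add: e_def)
      then show "y \<in> W (i, v)" by (simp add: W_def)
    qed
  qed
  obtain F where F: "finite F" "F \<subseteq> A" "\<forall>x\<in>K. \<exists>a\<in>F. x \<in> W a"
  proof -
    have s1: "\<And>x y. x \<in> K \<Longrightarrow> y \<in> K \<Longrightarrow> dist_p x y = dist_p y x" by (rule dist_sym)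
    have s2: "\<And>x. x \<in> K \<Longrightarrow> dist_p x x = 0" by (rule dist_refl)
    have "\<exists>F. finite F \<and> F \<subseteq> A \<and> (\<forall>x\<in>K. \<exists>a\<in>F. x \<in> W a)"
      by (rule seq_finite_subcover[OF K_seqcpt s1 dist_tri s2 cov])
    then obtain F0 where "finite F0" "F0 \<subseteq> A" "\<forall>x\<in>K. \<exists>a\<in>F0. x \<in> W a" by (elim exE conjE)
    then show ?thesis by (rule that)
  qed
  obtain ps where ps: "set ps = F" using finite_list[OF F(1)] by blast
  have idxv': "fst (ps!l) \<in> {1..n} \<and> snd (ps!l) \<in> U (fst (ps!l))" if "l < length ps" for l
  proof -
    have "ps!l \<in> set ps" using that by simp
    then have "ps!l \<in> F" using ps by simp
    with F(2) have "ps!l \<in> A" by (rule subsetD)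
    then show ?thesis by (simp add: A_def case_prod_beta)
  qed
  have covl': "\<exists>l<length ps. lo (fst (ps!l)) x < lo (fst (ps!l)) (x(fst (ps!l) := snd (ps!l)))" if "x \<in> K" for x
  proof -
    have "\<exists>a\<in>F. x \<in> W a" using F(3) that by (rule bspec)
    then obtain a where a: "a \<in> F" "x \<in> W a" by (elim bexE)
    then have "a \<in> set ps" using ps by simp
    then have "\<exists>i<length ps. ps!i = a" by (simp add: in_set_conv_nth)
    then obtain l where l: "l < length ps" "ps!l = a" by (elim exE conjE)
    have "x \<in> W (ps!l)" using a(2) l(2) by simp
    then have "lo (fst (ps!l)) x < lo (fst (ps!l)) (x(fst (ps!l) := snd (ps!l)))" by (simp add: W_def)
    then show ?thesis using l(1) by (intro exI[of _ l] conjI)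
  qed
  interpret G3: game3 n t0 t1 m M U G "length ps" "\<lambda>l. fst (ps!l)" "\<lambda>l. snd (ps!l)"
    by unfold_locales (fact idxv', fact covl')
  show False by (rule G3.game3_False)
qed

end

lemma abstract_main:
  assumes "1 \<le> n" "t0 < t1" "\<forall>k\<in>{1..n}. admissible t0 t1 (m k) (M k) (U k) \<and> convex_ctrl (U k)"
    "\<forall>i\<in>{1..n}. icont_prof n t0 t1 m U (G i)"
    "\<forall>i\<in>{1..n}. \<forall>us\<in>Prof n U. gqc (U i) (\<lambda>u. G i (us(i := u)))"
  shows "\<exists>us\<in>Prof n U. \<forall>i\<in>{1..n}. \<forall>u\<in>U i. \<not> iprec (G i us) (G i (us(i := u)))"
proof -
  interpret game2 n t0 t1 m M U G by unfold_locales (use assms in auto)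
  obtain us where us: "us \<in> K" "\<forall>i\<in>{1..n}. \<forall>v\<in>U i. lo i (us(i:=v)) \<le> lo i us"
    using scalar_nash by blast
  show ?thesis
  proof (intro bexI[of _ us] ballI notI)
    show "us \<in> Prof n U" using us(1) by (simp add: K_def)
    fix i u assume i: "i \<in> {1..n}" and u: "u \<in> U i" and ip: "iprec (G i us) (G i (us(i := u)))"
    then have "0 < fst (gH_diff (G i (us(i := u))) (G i us))" by (simp add: iprec_def int_pos_def)
    then have "lo i us < lo i (us(i := u))" by (simp add: gH_diff_def lo_def)
    moreover have "lo i (us(i := u)) \<le> lo i us" using us(2) i u by blast
    ultimately show False by linarith
  qed
qed

theorem theorem3p3:
  fixes n :: nat and t0 t1 :: real and x0 :: "'x::euclidean_space"
    and m :: "nat \<Rightarrow> nat" and M :: "nat \<Rightarrow> real"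
    and U :: "nat \<Rightarrow> (real \<Rightarrow> nat \<Rightarrow> real) set"
    and f :: "real \<Rightarrow> 'x \<Rightarrow> (nat \<Rightarrow> nat \<Rightarrow> real) \<Rightarrow> 'x"
    and d :: "nat \<Rightarrow> nat"
    and \<psi> :: "nat \<Rightarrow> 'x \<Rightarrow> nat \<Rightarrow> real \<times> real"
    and L :: "nat \<Rightarrow> real \<Rightarrow> 'x \<Rightarrow> (nat \<Rightarrow> nat \<Rightarrow> real) \<Rightarrow> nat \<Rightarrow> real \<times> real"
    and \<omega> :: "nat \<Rightarrow> nat \<Rightarrow> real"
  assumes n: "1 \<le> n"
    and t: "0 \<le> t0" "t0 < t1"
    and U: "\<forall>k\<in>{1..n}. admissible t0 t1 (m k) (M k) (U k) \<and> convex_ctrl (U k)"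
    and f: "f \<in> Yclass n t0 t1 m M"
    and \<psi>_ival: "\<forall>i\<in>{1..n}. \<forall>x. \<forall>k\<in>{1..d i}. valid_ival (\<psi> i x k)"
    and L_ival: "\<forall>i\<in>{1..n}. \<forall>s x w. \<forall>k\<in>{1..d i}. valid_ival (L i s x w k)"
    and L_int: "\<forall>i\<in>{1..n}. \<forall>us\<in>Prof n U. \<forall>k\<in>{1..d i}.
        (\<lambda>s. fst (L i s (state f t0 t1 x0 us s) (\<lambda>j. us j s) k)) integrable_on {t0..t1} \<and>
        (\<lambda>s. snd (L i s (state f t0 t1 x0 us s) (\<lambda>j. us j s) k)) integrable_on {t0..t1}"
    and \<omega>: "\<forall>i\<in>{1..n}. \<forall>k\<in>{1..d i}. 0 < \<omega> i k"
    and cont: "\<forall>i\<in>{1..n}. icont_prof n t0 t1 m U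
        (\<lambda>us. wsum (\<omega> i) (d i) (payoff \<psi> L f t0 t1 x0 i us))"
    and qc: "\<forall>i\<in>{1..n}. \<forall>us\<in>Prof n U.
        gqc (U i) (\<lambda>u. wsum (\<omega> i) (d i) (payoff \<psi> L f t0 t1 x0 i (us(i := u))))"
  shows "\<exists>us\<in>Prof n U. \<forall>i\<in>{1..n}. \<forall>u\<in>U i.
           \<not> iprec (wsum (\<omega> i) (d i) (payoff \<psi> L f t0 t1 x0 i us))
                   (wsum (\<omega> i) (d i) (payoff \<psi> L f t0 t1 x0 i (us(i := u))))"
proof -
  show ?thesis
    using abstract_main[of n t0 t1 m M U "\<lambda>i us. wsum (\<omega> i) (d i) (payoff \<psi> L f t0 t1 x0 i us)"]
      n t U cont qc by blast
qed

end
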